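(* The Fugue algorithm (described in the context) satisfies the strong list specification: for every execution of Fugue there is a total order $\prec$ on all list elements inserted anywhere in the execution such that (a) at any time, the list returned by a replica's $\mathsf{values}()$ consists of exactly the elements whose insert operation that replica has received, minus those whose delete operation it has received, arranged in the order $\prec$; and (b) if, just before a replica invokes $\mathsf{insert}(i,x)$, its $\mathsf{values}()$ are the elements $[a_0,\dots,a_{n-1}]$, then the newly inserted element $e$ satisfies $a_0,\dots,a_{i-1}\prec e\prec a_i,\dots,a_{n-1}$.
   Context: Replicated list model: a list is replicated over a set of replicas, each with a unique replica ID from a totally ordered set. A replica may invoke $\mathsf{insert}(i,x)$ (insert a new element with value $x$ at index $i$ of its current list, shifting later elements) or $\mathsf{delete}(i)$ (delete the element at index $i$). Each insertion creates a new list element (a unique instance of a value). Each operation generates a message that is disseminated by causal broadcast: every message is eventually delivered to every replica, a message is delivered at a replica only after all messages that had been delivered at its sender before it was sent, and the sender delivers its own message immediately. Replicas update their state only upon delivery. Fugue: each replica's state is a tree with a root node; each non-root node has a unique ID, a value (or the tombstone marker $\bot$), a parent, and a side ($L$ = left child or $R$ = right child). A node may have several left children and several right children. IDs are pairs $(\text{replicaID},\text{counter})$, compared lexicographically; each replica keeps a counter starting at 0. The traversal of a node $v$ is: traverse each left child of $v$ in increasing ID order, then visit $v$, then traverse each right child of $v$ in increasing ID order; the traversal of the tree starts at the root. The "traversal including tombstones" lists all non-root nodes in this order; $\mathsf{values}()$ returns the values of the nodes in this order whose value is not $\bot$ (the visible elements). $\mathsf{insert}(i,x)$ at a replica: create ID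 $(\text{replicaID},\text{counter})$ and increment the counter; let leftOrigin be the node of the $(i-1)$-th visible element, or the root if $i=0$; let rightOrigin be the node immediately after leftOrigin in the traversal including tombstones. If leftOrigin has no right child, the new node (with value $x$) is a right child of leftOrigin; otherwise it is a left child of rightOrigin. Broadcast the new node's (ID, value, parent ID, side); on delivery every replica adds it to its tree as the specified child of the specified parent. $\mathsf{delete}(i)$: broadcast the ID of the node of the $i$-th visible element; on delivery, each replica sets that node's value to $\bot$ (the node stays in the tree). *)

theory Defs
  imports Main "HOL-Library.Product_Lexorder"
begin

datatype side = L | R

type_synonym 'r nid = "'r \<times> nat"

text \<open>A node: (value or tombstone None, parent (None = root), side)\<close>
type_synonym ('r,'v) node = "'v option \<times> 'r nid option \<times> side"

record ('r,'v) rstate =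
  tree :: "'r nid \<Rightarrow> ('r,'v) node option"
  ctr :: nat

datatype ('r,'v) msg = InsMsg "'r nid" 'v "'r nid option" side | DelMsg "'r nid"

datatype 'v operation = Insert nat 'v | Delete nat

datatype ('r,'v) event = Invoke 'r "'v operation" | Deliver 'r nat
  \<comment> \<open>Deliver r j: replica r receives the j-th broadcast message (numbered in order of sending)\<close>

definition kids :: "('r::linorder,'v) rstate \<Rightarrow> 'r nid option \<Rightarrow> side \<Rightarrow> 'r nid list" where
  "kids st p s = sorted_list_of_set
     {c. \<exists>n. tree st c = Some n \<and> fst (snd n) = p \<and> snd (snd n) = s}"

fun trav :: "nat \<Rightarrow> ('r::linorder,'v) rstate \<Rightarrow> 'r nid option \<Rightarrow> 'r nid list" where
  "trav 0 st v = []"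
| "trav (Suc n) st v =
     concat (map (\<lambda>c. trav n st (Some c)) (kids st v L))
     @ (case v of None \<Rightarrow> [] | Some c \<Rightarrow> [c])
     @ concat (map (\<lambda>c. trav n st (Some c)) (kids st v R))"

text \<open>Traversal including tombstones (fuel = number of nodes + 1 bounds the tree depth).\<close>
definition traversal :: "('r::linorder,'v) rstate \<Rightarrow> 'r nid list" where
  "traversal st = trav (card (dom (tree st)) + 1) st None"

definition visible :: "('r,'v) rstate \<Rightarrow> 'r nid \<Rightarrow> bool" where
  "visible st c = (\<exists>x p s. tree st c = Some (Some x, p, s))"

definition elems :: "('r::linorder,'v) rstate \<Rightarrow> 'r nid list" where
  "elems st = filter (visible st) (traversal st)"

definition list_values :: "('r::linorder,'v) rstate \<Rightarrow> 'v list" where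
  "list_values st = map (\<lambda>c. the (fst (the (tree st c)))) (elems st)"

definition new_id :: "('r,'v) rstate \<Rightarrow> 'r \<Rightarrow> 'r nid" where
  "new_id st r = (r, ctr st)"

definition gen_insert :: "('r::linorder,'v) rstate \<Rightarrow> 'r \<Rightarrow> nat \<Rightarrow> 'v \<Rightarrow> ('r,'v) msg" where
  "gen_insert st r i x =
     (let lo = (if i = 0 then None else Some (elems st ! (i - 1)));
          T = traversal st;
          ro = (case lo of None \<Rightarrow> hd T | Some a \<Rightarrow> hd (tl (dropWhile (\<lambda>c. c \<noteq> a) T)))
      in if kids st lo R = [] then InsMsg (new_id st r) x lo R
         else InsMsg (new_id st r) x (Some ro) L)"

definition gen_delete :: "('r::linorder,'v) rstate \<Rightarrow> nat \<Rightarrow> ('r,'v) msg" where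
  "gen_delete st i = DelMsg (elems st ! i)"

fun apply_msg :: "('r,'v) msg \<Rightarrow> ('r,'v) rstate \<Rightarrow> ('r,'v) rstate" where
  "apply_msg (InsMsg c x p s) st = st\<lparr>tree := (tree st)(c \<mapsto> (Some x, p, s))\<rparr>"
| "apply_msg (DelMsg c) st =
     (case tree st c of None \<Rightarrow> st
      | Some (v, p, s) \<Rightarrow> st\<lparr>tree := (tree st)(c \<mapsto> (None, p, s))\<rparr>)"

text \<open>Global configuration: replica states, the broadcast log (sender, message,
  set of message numbers delivered at the sender before sending = causal dependencies),
  and the set of message numbers delivered at each replica.\<close>
record ('r,'v) config =
  reps :: "'r \<Rightarrow> ('r,'v) rstate"
  msgs :: "('r \<times> ('r,'v) msg \<times> nat set) list"
  dlv :: "'r \<Rightarrow> nat set"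

definition init :: "('r,'v) config" where
  "init = \<lparr>reps = (\<lambda>_. \<lparr>tree = Map.empty, ctr = 0\<rparr>), msgs = [], dlv = (\<lambda>_. {})\<rparr>"

definition broadcast :: "('r,'v) config \<Rightarrow> 'r \<Rightarrow> ('r,'v) rstate \<Rightarrow> ('r,'v) msg \<Rightarrow> ('r,'v) config" where
  "broadcast c r st m =
     c\<lparr>reps := (reps c)(r := apply_msg m st),
       msgs := msgs c @ [(r, m, dlv c r)],
       dlv := (dlv c)(r := insert (length (msgs c)) (dlv c r))\<rparr>"

fun step :: "('r::linorder,'v) config \<Rightarrow> ('r,'v) event \<Rightarrow> ('r,'v) config option" where
  "step c (Invoke r (Insert i x)) =
     (let st = reps c r in
      if i \<le> length (elems st)
      then Some (broadcast c r (st\<lparr>ctr := Suc (ctr st)\<rparr>) (gen_insert st r i x))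
      else None)"
| "step c (Invoke r (Delete i)) =
     (let st = reps c r in
      if i < length (elems st)
      then Some (broadcast c r st (gen_delete st i))
      else None)"
| "step c (Deliver r j) =
     (if j < length (msgs c) \<and> j \<notin> dlv c r \<and> snd (snd (msgs c ! j)) \<subseteq> dlv c r
      then Some (c\<lparr>reps := (reps c)(r := apply_msg (fst (snd (msgs c ! j))) (reps c r)),
                   dlv := (dlv c)(r := insert j (dlv c r))\<rparr>)
      else None)"

definition run :: "('r::linorder,'v) event list \<Rightarrow> ('r,'v) config option" where
  "run es = fold (\<lambda>e co. Option.bind co (\<lambda>c. step c e)) es (Some init)"

definition valid_exec :: "('r::linorder,'v) event list \<Rightarrow> bool" where
  "valid_exec es = (run es \<noteq> None)"

definition state_at :: "('r::linorder,'v) event list \<Rightarrow> nat \<Rightarrow> ('r,'v) config" where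
  "state_at es k = the (run (take k es))"

definition inserted :: "('r,'v) config \<Rightarrow> 'r nid set" where
  "inserted c = {e. \<exists>j < length (msgs c). \<exists>x p s. fst (snd (msgs c ! j)) = InsMsg e x p s}"

definition received_ins :: "('r,'v) config \<Rightarrow> 'r \<Rightarrow> 'r nid set" where
  "received_ins c r = {e. \<exists>j \<in> dlv c r. j < length (msgs c) \<and>
                          (\<exists>x p s. fst (snd (msgs c ! j)) = InsMsg e x p s)}"

definition received_del :: "('r,'v) config \<Rightarrow> 'r \<Rightarrow> 'r nid set" where
  "received_del c r = {e. \<exists>j \<in> dlv c r. j < length (msgs c) \<and> fst (snd (msgs c ! j)) = DelMsg e}"

end

theory Submission
  imports Defs
begin

type_synonym 'r gtr = "'r nid \<Rightarrow> ('r nid option \<times> side) option"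

definition sc :: "side \<Rightarrow> nat" where "sc s = (case s of L \<Rightarrow> 0 | R \<Rightarrow> 2)"

lemma sc_ne1[simp]: "sc s \<noteq> 1" "sc s \<noteq> Suc 0" by (cases s; auto simp: sc_def)+
lemma sc_L[simp]: "sc L = 0" and sc_R[simp]: "sc R = 2" by (auto simp: sc_def)
lemma sc_inj[simp]: "(sc s = sc t) = (s = t)" by (cases s; cases t) (auto simp: sc_def)

inductive haspath :: "'r gtr \<Rightarrow> 'r nid \<Rightarrow> (nat \<times> 'r nid) list \<Rightarrow> bool" for g where
  hp_root: "g c = Some (None, s) \<Longrightarrow> haspath g c [(sc s, c)]"
| hp_step: "g c = Some (Some q, s) \<Longrightarrow> haspath g q P \<Longrightarrow> haspath g c (P @ [(sc s, c)])"

lemma hp_last: "haspath g c P \<Longrightarrow> P \<noteq> [] \<and> snd (last P) = c \<and> c \<in> dom g"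
  by (induction rule: haspath.induct) (simp_all add: domI)

lemma hp_unique: "haspath g c P1 \<Longrightarrow> haspath g c P2 \<Longrightarrow> P1 = P2"
proof (induction arbitrary: P2 rule: haspath.induct)
  case (hp_root c s)
  from hp_root.prems show ?case by (cases rule: haspath.cases) (use hp_root in auto)
next
  case (hp_step c q s P)
  from hp_step.prems show ?case
  proof (cases rule: haspath.cases)
    case (hp_root s)
    then show ?thesis using hp_step.hyps(1) by simp
  next
    case (hp_step q' s' P')
    then show ?thesis using hp_step.hyps hp_step.IH by simp
  qed
qed

lemma hp_node: "haspath g c P \<Longrightarrow> haspath g d P \<Longrightarrow> c = d"
  using hp_last by metis

lemma hp_fst: "haspath g c P \<Longrightarrow> x \<in> set P \<Longrightarrow> fst x \<noteq> 1"
  by (induction rule: haspath.induct) auto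

lemma hp_dom: "haspath g c P \<Longrightarrow> snd ` set P \<subseteq> dom g"
  by (induction rule: haspath.induct) (simp_all add: domI)

lemma hp_prefix: "haspath g c P \<Longrightarrow> P = P1 @ x # P2 \<Longrightarrow> haspath g (snd x) (P1 @ [x])"
proof (induction arbitrary: P1 P2 rule: haspath.induct)
  case (hp_root c s)
  then show ?case by (cases P1) (auto intro: haspath.intros)
next
  case (hp_step c q s P)
  show ?case
  proof (cases P2 rule: rev_cases)
    case Nil
    with hp_step.prems have "x = (sc s, c)" "P1 = P" by auto
    then show ?thesis using hp_step by (auto intro: haspath.intros)
  next
    case (snoc ys y)
    with hp_step.prems have "P = P1 @ x # ys" by auto
    then show ?thesis using hp_step.IH by auto
  qed
qed

lemma hp_prefix_nth: "haspath g c P \<Longrightarrow> i < length P \<Longrightarrow> haspath g (snd (P!i)) (take (Suc i) P)"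
  using hp_prefix[of g c P "take i P" "P!i" "drop (Suc i) P"]
  by (simp add: id_take_nth_drop take_Suc_conv_app_nth)

lemma hp_distinct: "haspath g c P \<Longrightarrow> distinct (map snd P)"
proof (rule ccontr)
  assume h: "haspath g c P" "\<not> distinct (map snd P)"
  then obtain i j where ij: "i < j" "j < length P" "snd (P!i) = snd (P!j)"
    by (auto simp: distinct_conv_nth) (metis linorder_neqE_nat)
  have A: "haspath g (snd (P!i)) (take (Suc i) P)"
    by (rule hp_prefix_nth[OF h(1)]) (use ij in simp)
  have B: "haspath g (snd (P!j)) (take (Suc j) P)"
    by (rule hp_prefix_nth[OF h(1)]) (use ij in simp)
  from A B have "take (Suc i) P = take (Suc j) P" using ij hp_unique by metis
  then have "length (take (Suc i) P) = length (take (Suc j) P)" by simp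
  then show False using ij by simp
qed

lemma hp_len: "finite (dom g) \<Longrightarrow> haspath g c P \<Longrightarrow> length P \<le> card (dom g)"
proof -
  assume f: "finite (dom g)" and h: "haspath g c P"
  have "length P = card (set (map snd P))"
    using hp_distinct[OF h] by (metis distinct_card length_map)
  also have "\<dots> \<le> card (dom g)" using hp_dom[OF h] f by (simp add: card_mono)
  finally show ?thesis .
qed

lemma hp_mono: "haspath g c P \<Longrightarrow> g \<subseteq>\<^sub>m g' \<Longrightarrow> haspath g' c P"
proof (induction rule: haspath.induct)
  case (hp_root c s)
  then have "g' c = Some (None, s)" by (metis domI map_le_def)
  then show ?case by (rule haspath.intros)
next
  case (hp_step c q s P)
  then have "g' c = Some (Some q, s)" by (metis domI map_le_def)
  then show ?case using hp_step by (intro haspath.intros) auto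
qed

lemma hp_single: "haspath g c [x] \<Longrightarrow> \<exists>s. g c = Some (None, s) \<and> x = (sc s, c)"
  by (cases rule: haspath.cases) (auto dest: hp_last)

lemma hp_snoc: "haspath g c (P @ [x]) \<Longrightarrow> P \<noteq> [] \<Longrightarrow> \<exists>q s. g c = Some (Some q, s) \<and> haspath g q P \<and> x = (sc s, c)"
  by (cases rule: haspath.cases) auto

definition pp :: "'r gtr \<Rightarrow> 'r nid option \<Rightarrow> (nat \<times> 'r nid) list \<Rightarrow> bool" where
  "pp g v P = (case v of None \<Rightarrow> P = [] | Some c \<Rightarrow> haspath g c P)"

lemma child_path: "pp g v P \<Longrightarrow> g c = Some (v, s) \<Longrightarrow> haspath g c (P @ [(sc s, c)])"
  by (cases v) (auto simp: pp_def intro: haspath.intros)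

lemma child_path_inv: "pp g v P \<Longrightarrow> haspath g w (P @ x # Q) \<Longrightarrow> \<exists>s. g (snd x) = Some (v, s) \<and> fst x = sc s"
proof -
  assume pv: "pp g v P" and h: "haspath g w (P @ x # Q)"
  have hx: "haspath g (snd x) (P @ [x])" using hp_prefix[OF h] by simp
  show ?thesis
  proof (cases "P = []")
    case True
    then have "v = None" using pv hp_last by (cases v) (fastforce simp: pp_def)+
    obtain s where "g (snd x) = Some (None, s)" "x = (sc s, snd x)"
      using hp_single[of g "snd x" x] hx True by auto
    then show ?thesis using \<open>v = None\<close> by (metis fst_conv)
  next
    case False
    then obtain q s where "g (snd x) = Some (Some q, s)" "haspath g q P" "x = (sc s, snd x)"
      using hp_snoc[OF hx] by auto
    moreover have "v = Some q"
    proof (cases v)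
      case None
      then show ?thesis using pv \<open>P \<noteq> []\<close> by (simp add: pp_def)
    next
      case (Some c)
      then have "haspath g c P" using pv by (simp add: pp_def)
      then show ?thesis using Some hp_node calculation(2) by metis
    qed
    ultimately show ?thesis by (metis fst_conv)
  qed
qed

definition gst :: "('r,'v) rstate \<Rightarrow> 'r gtr" where
  "gst st = (\<lambda>c. map_option snd (tree st c))"

lemma dom_gst[simp]: "dom (gst st) = dom (tree st)"
  by (auto simp: gst_def)

lemma kids_set: "finite (dom (tree st)) \<Longrightarrow>
   set (kids st v s) = {c. gst st c = Some (v, s)}"
proof -
  assume f: "finite (dom (tree st))"
  have "{c. \<exists>n. tree st c = Some n \<and> fst (snd n) = v \<and> snd (snd n) = s} \<subseteq> dom (tree st)" by auto
  then have "finite {c. \<exists>n. tree st c = Some n \<and> fst (snd n) = v \<and> snd (snd n) = s}"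
    using f finite_subset by blast
  then show ?thesis unfolding kids_def gst_def by (auto)
qed

lemma kids_sorted: "sorted_wrt (<) (kids st v s)"
  unfolding kids_def by (rule strict_sorted_list_of_set)

definition pathof :: "'r gtr \<Rightarrow> 'r nid \<Rightarrow> (nat \<times> 'r nid) list" where
  "pathof g c = (THE P. haspath g c P)"

lemma pathof_eq: "haspath g c P \<Longrightarrow> pathof g c = P"
  unfolding pathof_def using hp_unique by blast

definition key :: "'r gtr \<Rightarrow> 'r nid \<Rightarrow> (nat \<times> 'r nid) list" where
  "key g c = pathof g c @ [(1, c)]"

lemma key_eq: "haspath g c P \<Longrightarrow> key g c = P @ [(1, c)]"
  by (simp add: key_def pathof_eq)

definition KR :: "'r::linorder gtr \<Rightarrow> 'r nid \<Rightarrow> 'r nid \<Rightarrow> bool" where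
  "KR g a b = ord_class.lexordp (key g a) (key g b)"

lemma lex_step: "x < y \<Longrightarrow> xs = P @ x # Z1 \<Longrightarrow> ys = P @ y # Z2 \<Longrightarrow> ord_class.lexordp xs ys"
  using lexordp_append_left_rightI[of x y P Z1 Z2] by simp

lemma sorted_concat: "(\<And>x. x \<in> set xs \<Longrightarrow> sorted_wrt Rr (f x)) \<Longrightarrow>
  sorted_wrt (\<lambda>x y. \<forall>a\<in>set (f x). \<forall>b\<in>set (f y). Rr a b) xs \<Longrightarrow> sorted_wrt Rr (concat (map f xs))"
  by (induction xs) (auto simp: sorted_wrt_append)

lemma trav_set:
  assumes f: "finite (dom (tree st))" and pv: "pp (gst st) v P"
  shows "set (trav n st v) = {w. \<exists>Q. haspath (gst st) w (P @ Q) \<and> length Q < n \<and> (Q = [] \<longrightarrow> v = Some w)}"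
using pv proof (induction n arbitrary: v P)
  case 0 show ?case by simp
next
  case (Suc n)
  let ?g = "gst st"
  have blk: "set (trav n st (Some c)) = {w. \<exists>Q. haspath ?g w ((P @ [(sc s, c)]) @ Q) \<and> length Q < n \<and> (Q = [] \<longrightarrow> Some c = Some w)}"
    if "c \<in> set (kids st v s)" for c s
  proof -
    have "?g c = Some (v, s)" using that kids_set[OF f] by auto
    then have "pp ?g (Some c) (P @ [(sc s, c)])" using child_path[OF Suc.prems] by (simp add: pp_def)
    then show ?thesis by (rule Suc.IH)
  qed
  show ?case
  proof (rule set_eqI, rule iffI)
    fix w assume "w \<in> set (trav (Suc n) st v)"
    then consider (l) c where "c \<in> set (kids st v L)" "w \<in> set (trav n st (Some c))" | (m) "v = Some w"
      | (r) c where "c \<in> set (kids st v R)" "w \<in> set (trav n st (Some c))"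
      by (auto split: option.splits)
    then show "w \<in> {w. \<exists>Q. haspath ?g w (P @ Q) \<and> length Q < Suc n \<and> (Q = [] \<longrightarrow> v = Some w)}"
    proof cases
      case l
      then obtain Q where "haspath ?g w ((P @ [(sc L, c)]) @ Q)" "length Q < n" using blk by blast
      then show ?thesis by (intro CollectI exI[of _ "(sc L, c) # Q"]) simp
    next
      case r
      then obtain Q where "haspath ?g w ((P @ [(sc R, c)]) @ Q)" "length Q < n" using blk by blast
      then show ?thesis by (intro CollectI exI[of _ "(sc R, c) # Q"]) simp
    next
      case m
      then show ?thesis using Suc.prems by (intro CollectI exI[of _ "[]"]) (simp add: pp_def)
    qed
  next
    fix w assume "w \<in> {w. \<exists>Q. haspath ?g w (P @ Q) \<and> length Q < Suc n \<and> (Q = [] \<longrightarrow> v = Some w)}"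
    then obtain Q where Q: "haspath ?g w (P @ Q)" "length Q < Suc n" "Q = [] \<longrightarrow> v = Some w" by blast
    show "w \<in> set (trav (Suc n) st v)"
    proof (cases Q)
      case Nil
      then show ?thesis using Q by simp
    next
      case (Cons x Q')
      obtain s where s: "?g (snd x) = Some (v, s)" "fst x = sc s"
        using child_path_inv[OF Suc.prems] Q(1) Cons by blast
      have x: "x = (sc s, snd x)" using s(2) by (metis prod.collapse)
      have k: "snd x \<in> set (kids st v s)" using s(1) kids_set[OF f] by auto
      have "Q' = [] \<Longrightarrow> snd x = w" using Q(1) Cons hp_last by fastforce
      then have "w \<in> set (trav n st (Some (snd x)))"
        using blk[OF k] Q Cons x by (auto intro!: exI[of _ Q'])
      then show ?thesis using k by (cases s) (auto split: option.splits)
    qed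
  qed
qed

lemma trav_sorted:
  assumes f: "finite (dom (tree st))" and pv: "pp (gst st) v P"
  shows "sorted_wrt (KR (gst st)) (trav n st v)"
using pv proof (induction n arbitrary: v P)
  case 0 show ?case by simp
next
  case (Suc n)
  let ?g = "gst st"
  have cp: "pp ?g (Some c) (P @ [(sc s, c)])" if "c \<in> set (kids st v s)" for c s
  proof -
    have "?g c = Some (v, s)" using that kids_set[OF f] by auto
    then show ?thesis using child_path[OF Suc.prems] by (simp add: pp_def)
  qed
  have bkey: "\<exists>Z. key ?g w = P @ (sc s, c) # Z"
    if c: "c \<in> set (kids st v s)" "w \<in> set (trav n st (Some c))" for c s w
  proof -
    obtain Q where "haspath ?g w ((P @ [(sc s, c)]) @ Q)"
      using c(2) trav_set[OF f cp[OF c(1)]] by blast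
    then show ?thesis by (simp add: key_eq)
  qed
  have bsort: "sorted_wrt (KR ?g) (trav n st (Some c))" if "c \<in> set (kids st v s)" for c s
    using Suc.IH cp[OF that] by blast
  have S: "sorted_wrt (KR ?g) (concat (map (\<lambda>c. trav n st (Some c)) (kids st v s)))" for s
  proof (rule sorted_concat)
    show "sorted_wrt (KR ?g) (trav n st (Some c))" if "c \<in> set (kids st v s)" for c using bsort that by blast
    show "sorted_wrt (\<lambda>x y. \<forall>a\<in>set (trav n st (Some x)). \<forall>b\<in>set (trav n st (Some y)). KR ?g a b) (kids st v s)"
    proof (rule sorted_wrt_mono_rel[OF _ kids_sorted])
      fix c1 c2 assume c: "c1 \<in> set (kids st v s)" "c2 \<in> set (kids st v s)" "c1 < c2"
      show "\<forall>a\<in>set (trav n st (Some c1)). \<forall>b\<in>set (trav n st (Some c2)). KR ?g a b"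
      proof (intro ballI)
        fix a b assume "a \<in> set (trav n st (Some c1))" "b \<in> set (trav n st (Some c2))"
        then obtain Z1 Z2 where "key ?g a = P @ (sc s, c1) # Z1" "key ?g b = P @ (sc s, c2) # Z2"
          using bkey c by metis
        then show "KR ?g a b" unfolding KR_def by (rule lex_step[rotated]) (use c in simp)
      qed
    qed
  qed
  have mk: "key ?g w = P @ [(1, w)]" if "v = Some w" for w
    using Suc.prems that by (simp add: pp_def key_eq)
  have LM: "KR ?g a b" if A: "a \<in> set (concat (map (\<lambda>c. trav n st (Some c)) (kids st v L)))"
     and B: "b \<in> set ((case v of None \<Rightarrow> [] | Some c \<Rightarrow> [c]) @ concat (map (\<lambda>c. trav n st (Some c)) (kids st v R)))" for a b
  proof -
    obtain c where "c \<in> set (kids st v L)" "a \<in> set (trav n st (Some c))"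
      using A by (simp only: set_concat set_map) blast
    then obtain Z1 where ka: "key ?g a = P @ (0, c) # Z1" using bkey by fastforce
    from B consider "v = Some b" | c' where "c' \<in> set (kids st v R)" "b \<in> set (trav n st (Some c'))"
      by (auto split: option.splits)
    then show ?thesis
    proof cases
      case 1 then show ?thesis using ka mk unfolding KR_def by (intro lex_step[of "(0,c)" "(1,b)"]) auto
    next
      case 2
      then obtain Z2 where "key ?g b = P @ (2, c') # Z2" using bkey by fastforce
      then show ?thesis using ka unfolding KR_def by (intro lex_step[of "(0,c)" "(2,c')"]) auto
    qed
  qed
  have MR: "KR ?g a b" if A: "v = Some a" and B: "b \<in> set (concat (map (\<lambda>c. trav n st (Some c)) (kids st v R)))" for a b
  proof -
    obtain c where "c \<in> set (kids st v R)" "b \<in> set (trav n st (Some c))"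
      using B by (simp only: set_concat set_map) blast
    then obtain Z where "key ?g b = P @ (2, c) # Z" using bkey by fastforce
    then show ?thesis using mk[OF A] unfolding KR_def by (intro lex_step[of "(1,a)" "(2,c)"]) auto
  qed
  let ?M = "case v of None \<Rightarrow> [] | Some c \<Rightarrow> [c]"
  let ?B = "concat (map (\<lambda>c. trav n st (Some c)) (kids st v R))"
  have MB: "sorted_wrt (KR ?g) (?M @ ?B)" unfolding sorted_wrt_append
  proof (intro conjI ballI)
    show "sorted_wrt (KR ?g) ?M" by (cases v) simp_all
    show "sorted_wrt (KR ?g) ?B" by (rule S)
    fix a b assume "a \<in> set ?M" "b \<in> set ?B"
    then show "KR ?g a b" using MR by (cases v) auto
  qed
  show ?case
    unfolding trav.simps sorted_wrt_append[of _ "concat (map (\<lambda>c. trav n st (Some c)) (kids st v L))"]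
    using S MB LM by blast
qed

lemma traversal_props:
  assumes f: "finite (dom (tree st))" and gd: "\<forall>c\<in>dom (tree st). \<exists>P. haspath (gst st) c P"
  shows "set (traversal st) = dom (tree st)" "sorted_wrt (KR (gst st)) (traversal st)"
proof -
  have pv: "pp (gst st) None []" by (simp add: pp_def)
  have fg: "finite (dom (gst st))" using f by simp
  show "sorted_wrt (KR (gst st)) (traversal st)" unfolding traversal_def by (rule trav_sorted[OF f pv])
  have "set (traversal st) = {w. \<exists>Q. haspath (gst st) w Q \<and> length Q < card (dom (tree st)) + 1 \<and> Q \<noteq> []}"
    unfolding traversal_def by (subst trav_set[OF f pv]) simp
  also have "\<dots> = dom (tree st)"
  proof (rule set_eqI, rule iffI)
    fix w assume "w \<in> {w. \<exists>Q. haspath (gst st) w Q \<and> length Q < card (dom (tree st)) + 1 \<and> Q \<noteq> []}"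
    then obtain Q where "haspath (gst st) w Q" by blast
    then show "w \<in> dom (tree st)" using hp_last dom_gst by metis
  next
    fix w assume "w \<in> dom (tree st)"
    then obtain P where "haspath (gst st) w P" using gd by blast
    moreover have "length P \<le> card (dom (tree st))" using hp_len[OF fg calculation] by simp
    moreover have "P \<noteq> []" using hp_last calculation(1) by blast
    ultimately show "w \<in> {w. \<exists>Q. haspath (gst st) w Q \<and> length Q < card (dom (tree st)) + 1 \<and> Q \<noteq> []}"
      by (intro CollectI exI[of _ P]) simp
  qed
  finally show "set (traversal st) = dom (tree st)" .
qed


abbreviation LX :: "'a::ord list \<Rightarrow> 'a list \<Rightarrow> bool" where "LX \<equiv> ord_class.lexordp"

lemma LX_trans: "LX (xs::'a::linorder list) ys \<Longrightarrow> LX ys zs \<Longrightarrow> LX xs zs"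
  by (rule lexordp_trans)

lemma LX_irrefl: "\<not> LX (xs::'a::linorder list) xs"
  by (rule lexordp_irreflexive')

lemma LX_asym: "LX (xs::'a::linorder list) ys \<Longrightarrow> \<not> LX ys xs"
  using LX_trans LX_irrefl by blast

lemma no1_split: "haspath g c P \<Longrightarrow> P = us @ \<alpha> # vs \<Longrightarrow> fst \<alpha> \<noteq> 1"
  using hp_fst by fastforce

lemma snoc_split1: "xs @ [z] = us @ \<alpha> # vs \<Longrightarrow> vs \<noteq> [] \<Longrightarrow> xs = us @ \<alpha> # butlast vs"
  by (metis butlast_append butlast_snoc list.distinct(1) append_Cons append_Nil butlast.simps(2))

text \<open>Comparison of a key against a key: the prefix case is impossible.\<close>
lemma key_lx_cases:
  fixes g :: "'r::linorder gtr"
  assumes ha: "haspath g a Pa" and hw: "haspath g w Pw"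
    and lt: "LX (Pa @ [(1::nat, a)]) (Pw @ [(1, w)])"
  obtains us \<alpha> \<beta> vs ws where "\<alpha> < \<beta>" "Pa @ [(1, a)] = us @ \<alpha> # vs" "Pw @ [(1, w)] = us @ \<beta> # ws"
proof -
  consider (pre) x vs where "Pw @ [(1, w)] = (Pa @ [(1, a)]) @ x # vs"
    | (dif) us \<alpha> \<beta> vs ws where "\<alpha> < \<beta>" "Pa @ [(1, a)] = us @ \<alpha> # vs" "Pw @ [(1, w)] = us @ \<beta> # ws"
    using lt[unfolded lexordp_iff] by blast
  then show ?thesis
  proof cases
    case pre
    then have "Pw = Pa @ (1, a) # butlast (x # vs)"
      using snoc_split1[of Pw "(1,w)" Pa "(1,a)" "x#vs"] by simp
    then show ?thesis using no1_split[OF hw, of Pa "(1,a)"] by simp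
  next
    case dif then show ?thesis using that by blast
  qed
qed

lemma split_first: "a \<in> set T \<Longrightarrow> \<exists>xs ys. T = xs @ a # ys \<and> a \<notin> set xs"
  by (metis split_list_first)

lemma dropWhile_split: "a \<notin> set xs \<Longrightarrow> dropWhile (\<lambda>c. c \<noteq> a) (xs @ a # ys) = a # ys"
  by (induction xs) auto

lemma snoc_split2: "xs @ [z] = us @ \<alpha> # [] \<Longrightarrow> xs = us \<and> z = \<alpha>"
  by simp

lemma less1: "(1::nat, a) < \<beta> \<Longrightarrow> fst \<beta> \<noteq> 1 \<Longrightarrow> fst \<beta> > 1"
  by (cases \<beta>) (auto simp: less_prod_def)

lemma less1': "\<alpha> < (1::nat, a) \<Longrightarrow> fst \<alpha> \<noteq> 1 \<Longrightarrow> fst \<alpha> = 0"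
  by (cases \<alpha>) (auto simp: less_prod_def)

lemma sc_gt1: "sc s > 1 \<Longrightarrow> s = R" by (cases s) auto
lemma sc_0: "sc s = 0 \<Longrightarrow> s = L" by (cases s) auto

lemma caseA_w:
  fixes g :: "'r::linorder gtr"
  assumes ha: "haspath g a Pa" and hw: "haspath g w Pw"
    and lt: "LX (Pa @ [(1, a)]) (Pw @ [(1, w)])"
    and nokid: "\<forall>c. g c \<noteq> Some (Some a, R)"
  shows "LX (Pa @ [(2, e), (1, e)]) (Pw @ [(1, w)])"
proof -
  obtain us \<alpha> \<beta> vs ws where ab: "\<alpha> < \<beta>" and A: "Pa @ [(1, a)] = us @ \<alpha> # vs"
    and W: "Pw @ [(1, w)] = us @ \<beta> # ws"
    by (rule key_lx_cases[OF ha hw lt])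
  show ?thesis
  proof (cases "vs = []")
    case False
    then have "Pa = us @ \<alpha> # butlast vs" using snoc_split1[OF A] by blast
    then show ?thesis using ab W by (intro lex_step[of \<alpha> \<beta>]) auto
  next
    case True
    then have ua: "us = Pa" "\<alpha> = (1, a)" using A by auto
    show ?thesis
    proof (cases "ws = []")
      case True
      then have "Pw = Pa" "\<beta> = (1, w)" using W ua by auto
      then have "w = a" using ha hw hp_node by metis
      then show ?thesis using ab \<open>\<beta> = (1, w)\<close> ua by simp
    next
      case False
      then have pw: "Pw = Pa @ \<beta> # butlast ws" using snoc_split1[OF W] ua by simp
      have "fst \<beta> \<noteq> 1" using no1_split[OF hw pw] .
      then have gt: "fst \<beta> > 1" using less1 ab ua by blast
      have "pp g (Some a) Pa" using ha by (simp add: pp_def)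
      from child_path_inv[OF this] hw pw obtain s' where "g (snd \<beta>) = Some (Some a, s')" "fst \<beta> = sc s'"
        by blast
      then show ?thesis using nokid gt sc_gt1 by metis
    qed
  qed
qed

lemma caseB_a:
  fixes g :: "'r::linorder gtr"
  assumes ha: "haspath g a Pa" and hr: "haspath g ro Pro"
    and lt: "LX (Pa @ [(1, a)]) (Pro @ [(1, ro)])"
    and adj: "\<not> (LX (Pa @ [(1, a)]) (Pa @ [(2, c), (1, c)]) \<and> LX (Pa @ [(2, c), (1, c)]) (Pro @ [(1, ro)]))"
  shows "LX (Pa @ [(1, a)]) (Pro @ [(0, e), (1, e)])"
proof -
  obtain us \<alpha> \<beta> vs ws where ab: "\<alpha> < \<beta>" and A: "Pa @ [(1, a)] = us @ \<alpha> # vs"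
    and W: "Pro @ [(1, ro)] = us @ \<beta> # ws"
    by (rule key_lx_cases[OF ha hr lt])
  show ?thesis
  proof (cases "ws = []")
    case False
    then have "Pro = us @ \<beta> # butlast ws" using snoc_split1[OF W] by blast
    then show ?thesis using ab A by (intro lex_step[of \<alpha> \<beta>]) auto
  next
    case True
    then have ur: "us = Pro" "\<beta> = (1, ro)" using W by auto
    show ?thesis
    proof (cases "vs = []")
      case True
      then have "Pa = Pro" "\<alpha> = (1, a)" using A ur by auto
      then have "a = ro" using ha hr hp_node by metis
      then show ?thesis using ab \<open>\<alpha> = (1, a)\<close> ur by simp
    next
      case False
      then have pa: "Pa = Pro @ \<alpha> # butlast vs" using snoc_split1[OF A] ur by simp
      have l1: "LX (Pa @ [(1, a)]) (Pa @ [(2, c), (1, c)])"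
        by (rule lex_step[of "(1,a)" "(2,c)" _ Pa "[]" _ "[(1,c)]"]) auto
      have l2: "LX (Pa @ [(2, c), (1, c)]) (Pro @ [(1, ro)])"
        using pa ab ur by (intro lex_step[of \<alpha> "(1,ro)" _ Pro "butlast vs @ [(2, c), (1, c)]" _ "[]"]) auto
      then show ?thesis using adj l1 by blast
    qed
  qed
qed


lemma KR_irrefl: "\<not> KR (g::'r::linorder gtr) a a" by (simp add: KR_def LX_irrefl)
lemma KR_trans: "KR (g::'r::linorder gtr) a b \<Longrightarrow> KR g b c \<Longrightarrow> KR g a c"
  unfolding KR_def by (rule LX_trans)
lemma KR_asym: "KR (g::'r::linorder gtr) a b \<Longrightarrow> \<not> KR g b a"
  using KR_irrefl KR_trans by blast

lemma sorted_split:
  assumes "sorted_wrt Rr (xs @ a # ys)"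
  shows "\<forall>w\<in>set xs. Rr w a" "\<forall>w\<in>set ys. Rr a w" "sorted_wrt Rr ys"
  using assms by (auto simp: sorted_wrt_append)

lemma ins_analysis:
  fixes st :: "('r::linorder,'v) rstate"
  assumes f: "finite (dom (tree st))"
    and gd: "\<forall>c\<in>dom (tree st). \<exists>P. haspath (gst st) c P"
    and rootR: "\<forall>c s. gst st c = Some (None, s) \<longrightarrow> s = R"
    and i: "i \<le> length (elems st)"
    and m: "gen_insert st r i x = InsMsg e x' p s"
  shows "\<exists>Pp. pp (gst st) p Pp \<and> (p = None \<longrightarrow> s = R) \<and>
     (\<forall>e'. (0 < i \<longrightarrow> LX (key (gst st) (elems st ! (i - 1))) (Pp @ [(sc s, e'), (1, e')])) \<and>
      (\<forall>w\<in>dom (tree st). (0 < i \<longrightarrow> LX (key (gst st) (elems st ! (i - 1))) (key (gst st) w)) \<longrightarrow>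
            LX (Pp @ [(sc s, e'), (1, e')]) (key (gst st) w)))"
proof -
  let ?g = "gst st"
  let ?T = "traversal st"
  have TS: "set ?T = dom (tree st)" "sorted_wrt (KR ?g) ?T" using traversal_props[OF f gd] by auto
  have path: "\<exists>P. haspath ?g c P" if "c \<in> dom (tree st)" for c using gd that by blast
  define lo where "lo = (if i = 0 then None else Some (elems st ! (i - 1)))"
  define ro where "ro = (case lo of None \<Rightarrow> hd ?T | Some a \<Rightarrow> hd (tl (dropWhile (\<lambda>c. c \<noteq> a) ?T)))"
  have m': "InsMsg e x' p s = (if kids st lo R = [] then InsMsg (new_id st r) x lo R else InsMsg (new_id st r) x (Some ro) L)"
    using m unfolding gen_insert_def lo_def ro_def Let_def by simp
  have adom: "elems st ! (i - 1) \<in> dom (tree st)" if "0 < i"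
  proof -
    have "elems st ! (i-1) \<in> set (elems st)" using i that by simp
    then show ?thesis using TS(1) unfolding elems_def by auto
  qed
  have kid_dom: "c \<in> dom (tree st)" if "c \<in> set (kids st v s')" for c v s'
    using that kids_set[OF f] dom_gst by fastforce
  show ?thesis
  proof (cases "kids st lo R = []")
    case True
    then have ps: "p = lo" "s = R" using m' by auto
    show ?thesis
    proof (cases "i = 0")
      case True
      have "dom (tree st) = {}"
      proof (rule ccontr)
        assume "dom (tree st) \<noteq> {}"
        then obtain c where "c \<in> dom (tree st)" by blast
        then obtain P where hp: "haspath ?g c P" using path by blast
        then obtain y rest where P: "P = [] @ y # rest" using hp_last[OF hp] by (cases P) auto
        have "pp ?g None []" by (simp add: pp_def)
        from child_path_inv[OF this] hp P obtain s' where g1: "?g (snd y) = Some (None, s')" by blast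
        then have "s' = R" using rootR by blast
        with g1 have "snd y \<in> set (kids st None R)" using kids_set[OF f] by simp
        then show False using \<open>kids st lo R = []\<close> \<open>i = 0\<close> lo_def by simp
      qed
      then show ?thesis using ps True lo_def by (intro exI[of _ "[]"]) (simp add: pp_def)
    next
      case False
      define a where "a = elems st ! (i - 1)"
      have lo: "lo = Some a" using False lo_def a_def by simp
      obtain Pa where ha: "haspath ?g a Pa" using adom path False a_def by blast
      have ka: "key ?g a = Pa @ [(1, a)]" using key_eq[OF ha] .
      have nokid: "\<forall>c. ?g c \<noteq> Some (Some a, R)"
      proof (intro allI notI)
        fix c assume "?g c = Some (Some a, R)"
        then have "c \<in> set (kids st lo R)" using lo kids_set[OF f] by simp
        then show False using \<open>kids st lo R = []\<close> by simp
      qed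
      show ?thesis
      proof (intro exI[of _ Pa] conjI allI ballI impI)
        show "pp ?g p Pa" using ps lo ha by (simp add: pp_def)
        show "s = R" if "p = None" using ps by simp
        fix e'
        show "LX (key ?g (elems st ! (i - 1))) (Pa @ [(sc s, e'), (1, e')])"
          using ka a_def ps lex_step[of "(1,a)" "(2,e')" _ Pa "[]" _ "[(1,e')]"] by simp
        fix w assume w: "w \<in> dom (tree st)" "0 < i \<longrightarrow> LX (key ?g (elems st ! (i - 1))) (key ?g w)"
        obtain Pw where hw: "haspath ?g w Pw" using path w(1) by blast
        have "LX (Pa @ [(1, a)]) (Pw @ [(1, w)])" using w(2) False ka key_eq[OF hw] a_def by simp
        from caseA_w[OF ha hw this nokid] show "LX (Pa @ [(sc s, e'), (1, e')]) (key ?g w)"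
          using ps key_eq[OF hw] by simp
      qed
    qed
  next
    case False
    then have ps: "p = Some ro" "s = L" using m' by auto
    have fin: "\<exists>Pp. pp ?g p Pp \<and> (\<forall>e'. LX (Pp @ [(sc s, e'), (1, e')]) (key ?g ro) \<and>
                 (\<forall>w\<in>dom (tree st). (w = ro \<or> KR ?g ro w) \<longrightarrow> LX (Pp @ [(sc s, e'), (1, e')]) (key ?g w)))
              \<and> ro \<in> dom (tree st)"
      if rd: "ro \<in> dom (tree st)"
    proof -
      obtain Pro where hr: "haspath ?g ro Pro" using path rd by blast
      have kr: "key ?g ro = Pro @ [(1, ro)]" using key_eq[OF hr] .
      have ke: "LX (Pro @ [(sc s, e'), (1, e')]) (key ?g ro)" for e'
        using kr ps lex_step[of "(0,e')" "(1,ro)" _ Pro "[(1,e')]" _ "[]"] by simp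
      show ?thesis
      proof (intro exI[of _ Pro] conjI allI ballI impI)
        show "pp ?g p Pro" using ps hr by (simp add: pp_def)
        fix e'
        show "LX (Pro @ [(sc s, e'), (1, e')]) (key ?g ro)" by (rule ke)
        fix w assume "w \<in> dom (tree st)" "w = ro \<or> KR ?g ro w"
        then show "LX (Pro @ [(sc s, e'), (1, e')]) (key ?g w)"
          using ke LX_trans unfolding KR_def by blast
      qed (rule rd)
    qed
    show ?thesis
    proof (cases "i = 0")
      case True
      then have lo: "lo = None" by (simp add: lo_def)
      obtain c where "c \<in> set (kids st None R)" using False lo by (metis list.set_sel(1))
      then have "c \<in> dom (tree st)" using kid_dom by blast
      then have "?T \<noteq> []" using TS(1) by auto
      then obtain T' where T: "?T = ro # T'" using ro_def lo by (cases ?T) auto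
      have srt: "\<forall>w \<in> set T'. KR ?g ro w" using TS(2) T by (metis sorted_wrt.simps(2))
      have rd: "ro \<in> dom (tree st)" using TS(1) T by (metis list.set_intros(1))
      have all: "\<forall>w\<in>dom (tree st). w = ro \<or> KR ?g ro w" using srt TS(1) T by auto
      from fin[OF rd] obtain Pp where "pp ?g p Pp" "\<forall>e'. (\<forall>w\<in>dom (tree st). (w = ro \<or> KR ?g ro w) \<longrightarrow> LX (Pp @ [(sc s, e'), (1, e')]) (key ?g w))"
        by blast
      then show ?thesis using True ps all by (intro exI[of _ Pp]) auto
    next
      case ipos: False
      define a where "a = elems st ! (i - 1)"
      have lo: "lo = Some a" using ipos lo_def a_def by simp
      have ad: "a \<in> dom (tree st)" using adom ipos a_def by simp
      obtain Pa where ha: "haspath ?g a Pa" using path ad by blast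
      have ka: "key ?g a = Pa @ [(1, a)]" using key_eq[OF ha] .
      obtain xs ys where T: "?T = xs @ a # ys" "a \<notin> set xs" using split_first ad TS(1) by metis
      have ro: "ro = hd ys" using ro_def lo T dropWhile_split[OF T(2), of ys] by simp
      obtain c where c: "c \<in> set (kids st (Some a) R)" using False lo by (metis list.set_sel(1))
      then have gc: "?g c = Some (Some a, R)" using kids_set[OF f] by simp
      have hc: "haspath ?g c (Pa @ [(2, c)])" using child_path[of ?g "Some a" Pa c R] gc ha by (simp add: pp_def)
      have kc: "key ?g c = Pa @ [(2, c), (1, c)]" using key_eq[OF hc] by simp
      have ac: "KR ?g a c" unfolding KR_def using ka kc lex_step[of "(1,a)" "(2,c)" _ Pa "[]" _ "[(1,c)]"] by simp
      have S: "\<forall>w\<in>set xs. KR ?g w a" "\<forall>w\<in>set ys. KR ?g a w" "sorted_wrt (KR ?g) ys"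
        using sorted_split[of "KR ?g" xs a ys] TS(2) T(1) by auto
      have "c \<in> set ?T" using kid_dom[OF c] TS(1) by simp
      moreover have "c \<notin> set xs" using S(1) ac KR_asym by blast
      moreover have "c \<noteq> a" using ac KR_irrefl by metis
      ultimately have "c \<in> set ys" using T(1) by auto
      then obtain ys' where ys: "ys = ro # ys'" using ro by (cases ys) auto
      have aro: "KR ?g a ro" using S(2) ys by simp
      have rd: "ro \<in> dom (tree st)" using TS(1) T(1) ys by auto
      have after: "\<forall>w\<in>dom (tree st). KR ?g a w \<longrightarrow> w = ro \<or> KR ?g ro w"
      proof (intro ballI impI)
        fix w assume w: "w \<in> dom (tree st)" "KR ?g a w"
        then have "w \<in> set xs \<or> w = a \<or> w = ro \<or> w \<in> set ys'" using TS(1) T(1) ys by auto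
        moreover have "w \<notin> set xs" using S(1) w(2) KR_asym by blast
        moreover have "w \<noteq> a" using w(2) KR_irrefl by metis
        moreover have "\<forall>v\<in>set ys'. KR ?g ro v" using S(3) ys by simp
        ultimately show "w = ro \<or> KR ?g ro w" by blast
      qed
      have adj: "\<not> (LX (Pa @ [(1, a)]) (Pa @ [(2, c), (1, c)]) \<and> LX (Pa @ [(2, c), (1, c)]) (Pro @ [(1, ro)]))"
        if "haspath ?g ro Pro" for Pro
      proof
        assume h: "LX (Pa @ [(1, a)]) (Pa @ [(2, c), (1, c)]) \<and> LX (Pa @ [(2, c), (1, c)]) (Pro @ [(1, ro)])"
        then have "KR ?g c ro" unfolding KR_def using kc key_eq[OF that] by simp
        moreover have "c = ro \<or> KR ?g ro c" using after kid_dom[OF c] ac by blast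
        ultimately show False using KR_asym KR_irrefl by metis
      qed
      obtain Pro where hr: "haspath ?g ro Pro" using path rd by blast
      from fin[OF rd] obtain Pp where pp1: "pp ?g p Pp"
        and pp2: "\<forall>e'. LX (Pp @ [(sc s, e'), (1, e')]) (key ?g ro) \<and> (\<forall>w\<in>dom (tree st). (w = ro \<or> KR ?g ro w) \<longrightarrow> LX (Pp @ [(sc s, e'), (1, e')]) (key ?g w))"
        by blast
      have "Pp = Pro" using pp1 ps hr hp_unique by (simp add: pp_def)
      show ?thesis
      proof (intro exI[of _ Pp] conjI allI ballI impI)
        show "pp ?g p Pp" by (rule pp1)
        show "s = R" if "p = None" using ps that by simp
        fix e'
        have "LX (Pa @ [(1, a)]) (Pro @ [(0, e'), (1, e')])"
          using caseB_a[OF ha hr _ adj[OF hr]] aro ka key_eq[OF hr] unfolding KR_def by simp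
        then show "LX (key ?g (elems st ! (i - 1))) (Pp @ [(sc s, e'), (1, e')])"
          using \<open>Pp = Pro\<close> ps ka a_def by simp
        fix w assume "w \<in> dom (tree st)" "0 < i \<longrightarrow> LX (key ?g (elems st ! (i - 1))) (key ?g w)"
        then have "w = ro \<or> KR ?g ro w" using after a_def ipos unfolding KR_def by blast
        then show "LX (Pp @ [(sc s, e'), (1, e')]) (key ?g w)" using pp2 \<open>w \<in> dom (tree st)\<close> by blast
      qed
    qed
  qed
qed


type_synonym ('r,'v) mlist = "('r \<times> ('r,'v) msg \<times> nat set) list"

definition gstep :: "'r gtr \<Rightarrow> ('r \<times> ('r,'v) msg \<times> nat set) \<Rightarrow> 'r gtr" where
  "gstep g mm = (case fst (snd mm) of InsMsg e x p s \<Rightarrow> g(e \<mapsto> (p, s)) | DelMsg _ \<Rightarrow> g)"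

definition Gc :: "('r,'v) config \<Rightarrow> 'r gtr" where
  "Gc c = foldl gstep Map.empty (msgs c)"

definition isins :: "('r,'v) mlist \<Rightarrow> nat \<Rightarrow> 'r nid \<Rightarrow> bool" where
  "isins ms j e = (j < length ms \<and> (\<exists>x p s. fst (snd (ms ! j)) = InsMsg e x p s))"

definition ri :: "('r,'v) mlist \<Rightarrow> nat set \<Rightarrow> 'r nid set" where
  "ri ms D = {e. \<exists>j\<in>D. isins ms j e}"

definition rdl :: "('r,'v) mlist \<Rightarrow> nat set \<Rightarrow> 'r nid set" where
  "rdl ms D = {e. \<exists>j\<in>D. j < length ms \<and> fst (snd (ms ! j)) = DelMsg e}"

lemma received_ins_ri: "received_ins c r = ri (msgs c) (dlv c r)"
  by (auto simp: received_ins_def ri_def isins_def)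

lemma received_del_rdl: "received_del c r = rdl (msgs c) (dlv c r)"
  by (auto simp: received_del_def rdl_def)

lemma inserted_eq: "inserted c = {e. \<exists>j. isins (msgs c) j e}"
  by (auto simp: inserted_def isins_def)

lemma isins_app: "isins (ms @ [mm]) j e = (isins ms j e \<or> (j = length ms \<and> (\<exists>x p s. fst (snd mm) = InsMsg e x p s)))"
  by (auto simp: isins_def nth_append)

lemma isins_prefix: "isins ms j e \<Longrightarrow> isins (ms @ ys) j e"
  by (auto simp: isins_def nth_append)

lemma ri_app: "D \<subseteq> {..<length ms} \<Longrightarrow> ri (ms @ [mm]) D = ri ms D"
  by (auto simp: ri_def isins_app)

lemma ri_app_ins: "D \<subseteq> {..<length ms} \<Longrightarrow>
   ri (ms @ [mm]) (insert (length ms) D) = ri ms D \<union> {e. \<exists>x p s. fst (snd mm) = InsMsg e x p s}"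
  by (auto simp: ri_def isins_app) (auto simp: isins_def)

lemma ri_ins: "ri ms (insert j D) = ri ms D \<union> {e. isins ms j e}"
  by (auto simp: ri_def)

lemma rdl_app: "D \<subseteq> {..<length ms} \<Longrightarrow> rdl (ms @ [mm]) D = rdl ms D"
  by (auto simp: rdl_def nth_append)

lemma rdl_app_ins: "D \<subseteq> {..<length ms} \<Longrightarrow>
   rdl (ms @ [mm]) (insert (length ms) D) = rdl ms D \<union> {e. fst (snd mm) = DelMsg e}"
  by (auto simp: rdl_def nth_append)

lemma rdl_ins: "rdl ms (insert j D) = rdl ms D \<union> {e. j < length ms \<and> fst (snd (ms ! j)) = DelMsg e}"
  by (auto simp: rdl_def)

lemma Gc_app: "msgs c' = msgs c @ [mm] \<Longrightarrow> Gc c' = gstep (Gc c) mm"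
  by (simp add: Gc_def)

lemma gst_ins: "gst (st\<lparr>tree := (tree st)(e \<mapsto> (v, p, s))\<rparr>) = (gst st)(e \<mapsto> (p, s))"
  by (auto simp: gst_def)

lemma gst_upd_val: "tree st e = Some (v0, p, s) \<Longrightarrow> gst (st\<lparr>tree := (tree st)(e \<mapsto> (v, p, s))\<rparr>) = gst st"
  by (auto simp: gst_def)

lemma map_le_upd_new: "e \<notin> dom g \<Longrightarrow> g \<subseteq>\<^sub>m g(e \<mapsto> v)"
  by (auto simp: map_le_def)

lemma apply_ok:
  fixes st0 :: "('r::linorder,'v) rstate" and ms :: "('r,'v) mlist"
  assumes uniq: "\<forall>j1 j2 e. isins ms j1 e \<longrightarrow> isins ms j2 e \<longrightarrow> j1 = j2"
   and V3: "\<forall>j e x p s. j < length ms \<longrightarrow> fst (snd (ms ! j)) = InsMsg e x p s \<longrightarrow> G e = Some (p, s)"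
   and V6i: "\<forall>j e x q s. j < length ms \<longrightarrow> fst (snd (ms ! j)) = InsMsg e x (Some q) s \<longrightarrow> (\<exists>j'\<in>snd (snd (ms ! j)). isins ms j' q)"
   and V6d: "\<forall>j e. j < length ms \<longrightarrow> fst (snd (ms ! j)) = DelMsg e \<longrightarrow> (\<exists>j'\<in>snd (snd (ms ! j)). isins ms j' e)"
   and j: "j < length ms" "j \<notin> D" "snd (snd (ms ! j)) \<subseteq> D"
   and b: "dom (tree st0) = ri ms D"
   and cc: "gst st0 \<subseteq>\<^sub>m G"
   and d: "\<forall>e\<in>dom (tree st0). \<exists>P. haspath (gst st0) e P"
   and e: "rdl ms D \<subseteq> ri ms D"
   and fv: "\<forall>e\<in>dom (tree st0). visible st0 e \<longleftrightarrow> e \<notin> rdl ms D"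
   and h: "finite (dom (tree st0))"
  shows "dom (tree (apply_msg (fst (snd (ms ! j))) st0)) = ri ms (insert j D) \<and>
    gst (apply_msg (fst (snd (ms ! j))) st0) \<subseteq>\<^sub>m G \<and>
    (\<forall>e\<in>dom (tree (apply_msg (fst (snd (ms ! j))) st0)). \<exists>P. haspath (gst (apply_msg (fst (snd (ms ! j))) st0)) e P) \<and>
    rdl ms (insert j D) \<subseteq> ri ms (insert j D) \<and>
    (\<forall>e\<in>dom (tree (apply_msg (fst (snd (ms ! j))) st0)). visible (apply_msg (fst (snd (ms ! j))) st0) e \<longleftrightarrow> e \<notin> rdl ms (insert j D)) \<and>
    finite (dom (tree (apply_msg (fst (snd (ms ! j))) st0))) \<and>
    ctr (apply_msg (fst (snd (ms ! j))) st0) = ctr st0"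
proof (cases "fst (snd (ms ! j))")
  case (InsMsg e x p s)
  have ij: "isins ms j e" using j InsMsg by (auto simp: isins_def)
  have ijiff: "isins ms j e' \<longleftrightarrow> e' = e" for e' using j InsMsg by (auto simp: isins_def)
  have enew: "e \<notin> ri ms D"
  proof
    assume "e \<in> ri ms D"
    then obtain j' where "j' \<in> D" "isins ms j' e" by (auto simp: ri_def)
    then show False using uniq ij j(2) by blast
  qed
  then have enew': "e \<notin> dom (gst st0)" using b by simp
  have ri': "ri ms (insert j D) = insert e (ri ms D)" using ijiff by (auto simp: ri_ins)
  have rdl': "rdl ms (insert j D) = rdl ms D" using InsMsg by (auto simp: rdl_ins)
  have ap: "apply_msg (fst (snd (ms ! j))) st0 = st0\<lparr>tree := (tree st0)(e \<mapsto> (Some x, p, s))\<rparr>" using InsMsg by simp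
  have gst': "gst (apply_msg (fst (snd (ms ! j))) st0) = (gst st0)(e \<mapsto> (p, s))" using ap gst_ins by metis
  have Ge: "G e = Some (p, s)" using V3 j InsMsg by blast
  have mono: "gst st0 \<subseteq>\<^sub>m (gst st0)(e \<mapsto> (p, s))" using map_le_upd_new[OF enew'] .
  have pe: "\<exists>P. haspath ((gst st0)(e \<mapsto> (p, s))) e P"
  proof (cases p)
    case None
    have "((gst st0)(e \<mapsto> (p, s))) e = Some (None, s)" using None by simp
    then show ?thesis by (blast intro: hp_root)
  next
    case (Some q)
    then obtain j' where "j' \<in> snd (snd (ms ! j))" "isins ms j' q" using V6i j InsMsg by blast
    then have "q \<in> dom (tree st0)" using b j(3) by (auto simp: ri_def)
    then obtain Pq where "haspath (gst st0) q Pq" using d by blast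
    then have "haspath ((gst st0)(e \<mapsto> (p, s))) q Pq" using hp_mono mono by blast
    moreover have "((gst st0)(e \<mapsto> (p, s))) e = Some (Some q, s)" using Some by simp
    ultimately show ?thesis by (blast intro: hp_step)
  qed
  show ?thesis
  proof (intro conjI)
    show "dom (tree (apply_msg (fst (snd (ms ! j))) st0)) = ri ms (insert j D)" using ap ri' b by simp
    show "gst (apply_msg (fst (snd (ms ! j))) st0) \<subseteq>\<^sub>m G" using gst' cc Ge by (auto simp: map_le_def)
    show "\<forall>e\<in>dom (tree (apply_msg (fst (snd (ms ! j))) st0)). \<exists>P. haspath (gst (apply_msg (fst (snd (ms ! j))) st0)) e P"
    proof
      fix e' assume "e' \<in> dom (tree (apply_msg (fst (snd (ms ! j))) st0))"
      then have "e' = e \<or> e' \<in> dom (tree st0)" using ap by auto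
      then show "\<exists>P. haspath (gst (apply_msg (fst (snd (ms ! j))) st0)) e' P"
      proof
        assume "e' \<in> dom (tree st0)"
        then obtain P where "haspath (gst st0) e' P" using d by blast
        then show ?thesis using gst' hp_mono[OF _ mono] by metis
      qed (use gst' pe in simp)
    qed
    show "rdl ms (insert j D) \<subseteq> ri ms (insert j D)" using rdl' ri' e by auto
    show "\<forall>e'\<in>dom (tree (apply_msg (fst (snd (ms ! j))) st0)). visible (apply_msg (fst (snd (ms ! j))) st0) e' \<longleftrightarrow> e' \<notin> rdl ms (insert j D)"
      using ap rdl' fv e enew by (auto simp: visible_def)
    show "finite (dom (tree (apply_msg (fst (snd (ms ! j))) st0)))" using ap h by simp
    show "ctr (apply_msg (fst (snd (ms ! j))) st0) = ctr st0" using ap by simp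
  qed
next
  case (DelMsg e)
  obtain j' where "j' \<in> snd (snd (ms ! j))" "isins ms j' e" using V6d j DelMsg by blast
  then have ed: "e \<in> dom (tree st0)" using b j(3) by (auto simp: ri_def)
  then obtain v0 p0 s0 where t0: "tree st0 e = Some (v0, p0, s0)" by (auto simp: dom_def)
  have ap: "apply_msg (fst (snd (ms ! j))) st0 = st0\<lparr>tree := (tree st0)(e \<mapsto> (None, p0, s0))\<rparr>" using DelMsg t0 by simp
  have gst': "gst (apply_msg (fst (snd (ms ! j))) st0) = gst st0" using ap gst_upd_val[OF t0] by metis
  have ri': "ri ms (insert j D) = ri ms D" using DelMsg by (auto simp: ri_ins isins_def)
  have rdl': "rdl ms (insert j D) = insert e (rdl ms D)" using DelMsg j by (auto simp: rdl_ins)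
  show ?thesis
  proof (intro conjI)
    show "dom (tree (apply_msg (fst (snd (ms ! j))) st0)) = ri ms (insert j D)" using ap ri' b ed by auto
    show "gst (apply_msg (fst (snd (ms ! j))) st0) \<subseteq>\<^sub>m G" using gst' cc by simp
    show "\<forall>e\<in>dom (tree (apply_msg (fst (snd (ms ! j))) st0)). \<exists>P. haspath (gst (apply_msg (fst (snd (ms ! j))) st0)) e P"
      using gst' d ap ed by auto
    show "rdl ms (insert j D) \<subseteq> ri ms (insert j D)" using rdl' ri' e ed b by auto
    show "\<forall>e'\<in>dom (tree (apply_msg (fst (snd (ms ! j))) st0)). visible (apply_msg (fst (snd (ms ! j))) st0) e' \<longleftrightarrow> e' \<notin> rdl ms (insert j D)"
      using ap rdl' fv by (auto simp: visible_def)
    show "finite (dom (tree (apply_msg (fst (snd (ms ! j))) st0)))" using ap h by simp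
    show "ctr (apply_msg (fst (snd (ms ! j))) st0) = ctr st0" using ap by simp
  qed
qed


definition Gm :: "('r,'v) mlist \<Rightarrow> 'r gtr" where
  "Gm ms = foldl gstep Map.empty ms"

lemma Gm_app: "Gm (ms @ [mm]) = gstep (Gm ms) mm"
  by (simp add: Gm_def)

definition ginv :: "('r::linorder,'v) mlist \<Rightarrow> bool" where
 "ginv ms \<longleftrightarrow>
   (\<forall>j1 j2 e. isins ms j1 e \<longrightarrow> isins ms j2 e \<longrightarrow> j1 = j2) \<and>
   (\<forall>j e x p s. j < length ms \<longrightarrow> fst (snd (ms ! j)) = InsMsg e x p s \<longrightarrow> Gm ms e = Some (p, s)) \<and>
   dom (Gm ms) = {e. \<exists>j. isins ms j e} \<and>
   (\<forall>e\<in>dom (Gm ms). \<exists>P. haspath (Gm ms) e P) \<and>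
   (\<forall>e s. Gm ms e = Some (None, s) \<longrightarrow> s = R) \<and>
   (\<forall>j e x q s. j < length ms \<longrightarrow> fst (snd (ms ! j)) = InsMsg e x (Some q) s \<longrightarrow> (\<exists>j'\<in>snd (snd (ms ! j)). isins ms j' q)) \<and>
   (\<forall>j e. j < length ms \<longrightarrow> fst (snd (ms ! j)) = DelMsg e \<longrightarrow> (\<exists>j'\<in>snd (snd (ms ! j)). isins ms j' e))"

definition rinv :: "('r::linorder,'v) config \<Rightarrow> 'r \<Rightarrow> bool" where
 "rinv c r \<longleftrightarrow>
   dlv c r \<subseteq> {..<length (msgs c)} \<and>
   dom (tree (reps c r)) = ri (msgs c) (dlv c r) \<and>
   gst (reps c r) \<subseteq>\<^sub>m Gm (msgs c) \<and>
   (\<forall>e\<in>dom (tree (reps c r)). \<exists>P. haspath (gst (reps c r)) e P) \<and>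
   rdl (msgs c) (dlv c r) \<subseteq> ri (msgs c) (dlv c r) \<and>
   (\<forall>e\<in>dom (tree (reps c r)). visible (reps c r) e \<longleftrightarrow> e \<notin> rdl (msgs c) (dlv c r)) \<and>
   (\<forall>e\<in>dom (Gm (msgs c)). fst e = r \<longrightarrow> snd e < ctr (reps c r)) \<and>
   finite (dom (tree (reps c r)))"

definition einv :: "('r::linorder,'v) config \<Rightarrow> bool" where
  "einv c \<longleftrightarrow> ginv (msgs c) \<and> (\<forall>r. rinv c r)"

lemma inv_init: "einv init"
  by (auto simp: einv_def ginv_def rinv_def init_def Gm_def isins_def ri_def rdl_def gst_def)

lemma gen_insert_form: "\<exists>p s. gen_insert st r i x = InsMsg (new_id st r) x p s"
  by (simp add: gen_insert_def Let_def)

lemma ginv_apply_ok: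
  assumes "ginv ms" "j < length ms" "j \<notin> D" "snd (snd (ms ! j)) \<subseteq> D"
   and "dom (tree st0) = ri ms D" "gst st0 \<subseteq>\<^sub>m Gm ms"
   and "\<forall>e\<in>dom (tree st0). \<exists>P. haspath (gst st0) e P"
   and "rdl ms D \<subseteq> ri ms D"
   and "\<forall>e\<in>dom (tree st0). visible st0 e \<longleftrightarrow> e \<notin> rdl ms D"
   and "finite (dom (tree st0))"
  shows "dom (tree (apply_msg (fst (snd (ms ! j))) st0)) = ri ms (insert j D) \<and>
    gst (apply_msg (fst (snd (ms ! j))) st0) \<subseteq>\<^sub>m Gm ms \<and>
    (\<forall>e\<in>dom (tree (apply_msg (fst (snd (ms ! j))) st0)). \<exists>P. haspath (gst (apply_msg (fst (snd (ms ! j))) st0)) e P) \<and>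
    rdl ms (insert j D) \<subseteq> ri ms (insert j D) \<and>
    (\<forall>e\<in>dom (tree (apply_msg (fst (snd (ms ! j))) st0)). visible (apply_msg (fst (snd (ms ! j))) st0) e \<longleftrightarrow> e \<notin> rdl ms (insert j D)) \<and>
    finite (dom (tree (apply_msg (fst (snd (ms ! j))) st0))) \<and>
    ctr (apply_msg (fst (snd (ms ! j))) st0) = ctr st0"
  using assms unfolding ginv_def by (intro apply_ok) auto

lemma deliver_inv:
  assumes einv: "einv c" and st: "step c (Deliver r j) = Some c'"
  shows "einv c'"
proof -
  have en: "j < length (msgs c)" "j \<notin> dlv c r" "snd (snd (msgs c ! j)) \<subseteq> dlv c r"
   and c': "c' = c\<lparr>reps := (reps c)(r := apply_msg (fst (snd (msgs c ! j))) (reps c r)),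
                   dlv := (dlv c)(r := insert j (dlv c r))\<rparr>"
    using st by (auto split: if_splits)
  have g: "ginv (msgs c)" and rv: "\<And>r. rinv c r" using einv by (auto simp: einv_def)
  have rr: "rinv c r" by (rule rv)
  have A: "dom (tree (apply_msg (fst (snd (msgs c ! j))) (reps c r))) = ri (msgs c) (insert j (dlv c r)) \<and>
    gst (apply_msg (fst (snd (msgs c ! j))) (reps c r)) \<subseteq>\<^sub>m Gm (msgs c) \<and>
    (\<forall>e\<in>dom (tree (apply_msg (fst (snd (msgs c ! j))) (reps c r))). \<exists>P. haspath (gst (apply_msg (fst (snd (msgs c ! j))) (reps c r))) e P) \<and>
    rdl (msgs c) (insert j (dlv c r)) \<subseteq> ri (msgs c) (insert j (dlv c r)) \<and>
    (\<forall>e\<in>dom (tree (apply_msg (fst (snd (msgs c ! j))) (reps c r))). visible (apply_msg (fst (snd (msgs c ! j))) (reps c r)) e \<longleftrightarrow> e \<notin> rdl (msgs c) (insert j (dlv c r))) \<and>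
    finite (dom (tree (apply_msg (fst (snd (msgs c ! j))) (reps c r)))) \<and>
    ctr (apply_msg (fst (snd (msgs c ! j))) (reps c r)) = ctr (reps c r)"
    using rr g en by (intro ginv_apply_ok) (auto simp: rinv_def)
  have "rinv c' r'" for r'
  proof (cases "r' = r")
    case True
    then show ?thesis using A rr en c' by (auto simp: rinv_def)
  next
    case False
    have e: "reps c' r' = reps c r'" "dlv c' r' = dlv c r'" "msgs c' = msgs c" using c' False by auto
    show ?thesis using rv[of r'] unfolding rinv_def e .
  qed
  then show ?thesis using g c' by (simp add: einv_def)
qed


lemma gst_ctr[simp]: "gst (st\<lparr>ctr := n\<rparr>) = gst st" by (simp add: gst_def)
lemma visible_ctr[simp]: "visible (st\<lparr>ctr := n\<rparr>) = visible st" by (simp add: visible_def fun_eq_iff)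

lemma insert_inv:
  assumes einv: "einv c" and stp: "step c (Invoke r (Insert i x)) = Some c'"
  shows "einv c'"
proof -
  define st where "st = reps c r"
  define ms where "ms = msgs c"
  define D where "D = dlv c r"
  obtain p s where m: "gen_insert st r i x = InsMsg (new_id st r) x p s" using gen_insert_form[of st r i x] by (elim exE) 
  define e where "e = new_id st r"
  define mm where "mm = (r, InsMsg e x p s, D)"
  define st1 where "st1 = st\<lparr>ctr := Suc (ctr st)\<rparr>"
  have il: "i \<le> length (elems st)" using stp st_def by (auto simp: Let_def split: if_splits)
  have c': "c' = broadcast c r st1 (InsMsg e x p s)" using stp il m by (simp add: Let_def st_def st1_def e_def)
  have ms': "msgs c' = ms @ [mm]" using c' by (simp add: broadcast_def ms_def mm_def D_def)
  have reps': "reps c' = (reps c)(r := apply_msg (InsMsg e x p s) st1)" using c' by (simp add: broadcast_def)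
  have dlv': "dlv c' = (dlv c)(r := insert (length ms) D)" using c' by (simp add: broadcast_def ms_def D_def)
  have g: "ginv ms" and rv: "\<And>r. rinv c r" using einv by (auto simp: einv_def ms_def)
  have rr: "rinv c r" by (rule rv)
  from rr have Dsub: "D \<subseteq> {..<length ms}" and b: "dom (tree st) = ri ms D" and cc: "gst st \<subseteq>\<^sub>m Gm ms"
    and d: "\<forall>e\<in>dom (tree st). \<exists>P. haspath (gst st) e P" and ee: "rdl ms D \<subseteq> ri ms D"
    and fv: "\<forall>e\<in>dom (tree st). visible st e \<longleftrightarrow> e \<notin> rdl ms D"
    and ctrI: "\<forall>e\<in>dom (Gm ms). fst e = r \<longrightarrow> snd e < ctr st" and fin: "finite (dom (tree st))"
    unfolding rinv_def st_def ms_def D_def by auto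
  from g have gu: "\<forall>j1 j2 e. isins ms j1 e \<longrightarrow> isins ms j2 e \<longrightarrow> j1 = j2"
    and g3: "\<forall>j e x p s. j < length ms \<longrightarrow> fst (snd (ms ! j)) = InsMsg e x p s \<longrightarrow> Gm ms e = Some (p, s)"
    and gdom: "dom (Gm ms) = {e. \<exists>j. isins ms j e}"
    and gp: "\<forall>e\<in>dom (Gm ms). \<exists>P. haspath (Gm ms) e P"
    and gR: "\<forall>e s. Gm ms e = Some (None, s) \<longrightarrow> s = R"
    and g6: "\<forall>j e x q s. j < length ms \<longrightarrow> fst (snd (ms ! j)) = InsMsg e x (Some q) s \<longrightarrow> (\<exists>j'\<in>snd (snd (ms ! j)). isins ms j' q)"
    and g7: "\<forall>j e. j < length ms \<longrightarrow> fst (snd (ms ! j)) = DelMsg e \<longrightarrow> (\<exists>j'\<in>snd (snd (ms ! j)). isins ms j' e)"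
    unfolding ginv_def by blast+
  have rootR: "\<forall>c s. gst st c = Some (None, s) \<longrightarrow> s = R"
    using cc gR by (metis domI map_le_def)
  obtain Pp where pp: "pp (gst st) p Pp" and pR: "p = None \<longrightarrow> s = R"
    using ins_analysis[OF fin d rootR il m] by blast
  have enew: "e \<notin> dom (Gm ms)" using ctrI unfolding e_def new_id_def by (metis fst_conv snd_conv less_irrefl)
  have Gm': "Gm (ms @ [mm]) = (Gm ms)(e \<mapsto> (p, s))" by (simp add: Gm_app gstep_def mm_def)
  have mono: "Gm ms \<subseteq>\<^sub>m Gm (ms @ [mm])" using Gm' map_le_upd_new[OF enew] by simp
  have isins': "isins (ms @ [mm]) j e' \<longleftrightarrow> isins ms j e' \<or> (j = length ms \<and> e' = e)" for j e'
    by (auto simp: isins_app mm_def)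
  have notold: "\<not> isins ms j e" for j using gdom enew by blast
  have ppath: "\<exists>P. haspath (Gm (ms @ [mm])) e P"
  proof (cases p)
    case None
    then have "Gm (ms @ [mm]) e = Some (None, s)" using Gm' by simp
    then show ?thesis by (blast intro: hp_root)
  next
    case (Some q)
    then have "haspath (gst st) q Pp" using pp by (simp add: pp_def)
    then have "haspath (Gm (ms @ [mm])) q Pp" using hp_mono cc mono by blast
    moreover have "Gm (ms @ [mm]) e = Some (Some q, s)" using Gm' Some by simp
    ultimately show ?thesis by (blast intro: hp_step)
  qed
  have nth': "(ms @ [mm]) ! j = ms ! j" if "j < length ms" for j using that by (simp add: nth_append)
  have u1: "\<forall>j1 j2 e. isins (ms @ [mm]) j1 e \<longrightarrow> isins (ms @ [mm]) j2 e \<longrightarrow> j1 = j2"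
    using isins' notold gu by metis
  have u2: "\<forall>j e' x' p' s'. j < length (ms @ [mm]) \<longrightarrow> fst (snd ((ms @ [mm]) ! j)) = InsMsg e' x' p' s' \<longrightarrow> Gm (ms @ [mm]) e' = Some (p', s')"
  proof (intro allI impI)
    fix j e' x' p' s' assume j: "j < length (ms @ [mm])" "fst (snd ((ms @ [mm]) ! j)) = InsMsg e' x' p' s'"
    show "Gm (ms @ [mm]) e' = Some (p', s')"
    proof (cases "j < length ms")
      case True
      then have "Gm ms e' = Some (p', s')" using g3 j nth' by metis
      moreover then have "e' \<noteq> e" using enew by auto
      ultimately show ?thesis using Gm' by simp
    next
      case False
      then have "j = length ms" using j by simp
      then show ?thesis using j Gm' by (simp add: mm_def)
    qed
  qed
  have u3: "dom (Gm (ms @ [mm])) = {e'. \<exists>j. isins (ms @ [mm]) j e'}"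
    using Gm' gdom isins' by auto
  have u4: "\<forall>e'\<in>dom (Gm (ms @ [mm])). \<exists>P. haspath (Gm (ms @ [mm])) e' P"
  proof
    fix e' assume "e' \<in> dom (Gm (ms @ [mm]))"
    then have "e' = e \<or> e' \<in> dom (Gm ms)" using Gm' by auto
    then show "\<exists>P. haspath (Gm (ms @ [mm])) e' P"
    proof
      assume "e' \<in> dom (Gm ms)"
      then show ?thesis using gp hp_mono mono by blast
    qed (use ppath in simp)
  qed
  have u5: "\<forall>e' s'. Gm (ms @ [mm]) e' = Some (None, s') \<longrightarrow> s' = R"
    using Gm' gR pR by auto
  have u6: "\<forall>j e' x' q s'. j < length (ms @ [mm]) \<longrightarrow> fst (snd ((ms @ [mm]) ! j)) = InsMsg e' x' (Some q) s' \<longrightarrow> (\<exists>j'\<in>snd (snd ((ms @ [mm]) ! j)). isins (ms @ [mm]) j' q)"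
  proof (intro allI impI)
    fix j e' x' q s' assume j: "j < length (ms @ [mm])" "fst (snd ((ms @ [mm]) ! j)) = InsMsg e' x' (Some q) s'"
    show "\<exists>j'\<in>snd (snd ((ms @ [mm]) ! j)). isins (ms @ [mm]) j' q"
    proof (cases "j < length ms")
      case True
      then show ?thesis using g6 j nth' isins_prefix by metis
    next
      case False
      then have jl: "j = length ms" using j by simp
      then have "p = Some q" using j by (simp add: mm_def)
      then have "haspath (gst st) q Pp" using pp by (simp add: pp_def)
      then have "q \<in> dom (tree st)" using hp_last dom_gst by metis
      then obtain j' where "j' \<in> D" "isins ms j' q" using b by (auto simp: ri_def)
      then show ?thesis using jl isins_prefix[of ms j' q "[mm]"] by (auto simp: mm_def)
    qed
  qed
  have u7: "\<forall>j e'. j < length (ms @ [mm]) \<longrightarrow> fst (snd ((ms @ [mm]) ! j)) = DelMsg e' \<longrightarrow> (\<exists>j'\<in>snd (snd ((ms @ [mm]) ! j)). isins (ms @ [mm]) j' e')"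
  proof (intro allI impI)
    fix j e' assume j: "j < length (ms @ [mm])" "fst (snd ((ms @ [mm]) ! j)) = DelMsg e'"
    show "\<exists>j'\<in>snd (snd ((ms @ [mm]) ! j)). isins (ms @ [mm]) j' e'"
    proof (cases "j < length ms")
      case True
      then show ?thesis using g7 j nth' isins_prefix by metis
    next
      case False
      then have "j = length ms" using j by simp
      then show ?thesis using j by (simp add: mm_def)
    qed
  qed
  have g': "ginv (ms @ [mm])" unfolding ginv_def using u1 u2 u3 u4 u5 u6 u7 by blast
  have lenD: "length ms \<notin> D" using Dsub by auto
  have mmj: "fst (snd ((ms @ [mm]) ! length ms)) = InsMsg e x p s" by (simp add: mm_def)
  have A: "dom (tree (apply_msg (fst (snd ((ms @ [mm]) ! length ms))) st1)) = ri (ms @ [mm]) (insert (length ms) D) \<and>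
    gst (apply_msg (fst (snd ((ms @ [mm]) ! length ms))) st1) \<subseteq>\<^sub>m Gm (ms @ [mm]) \<and>
    (\<forall>e\<in>dom (tree (apply_msg (fst (snd ((ms @ [mm]) ! length ms))) st1)). \<exists>P. haspath (gst (apply_msg (fst (snd ((ms @ [mm]) ! length ms))) st1)) e P) \<and>
    rdl (ms @ [mm]) (insert (length ms) D) \<subseteq> ri (ms @ [mm]) (insert (length ms) D) \<and>
    (\<forall>e\<in>dom (tree (apply_msg (fst (snd ((ms @ [mm]) ! length ms))) st1)). visible (apply_msg (fst (snd ((ms @ [mm]) ! length ms))) st1) e \<longleftrightarrow> e \<notin> rdl (ms @ [mm]) (insert (length ms) D)) \<and>
    finite (dom (tree (apply_msg (fst (snd ((ms @ [mm]) ! length ms))) st1))) \<and>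
    ctr (apply_msg (fst (snd ((ms @ [mm]) ! length ms))) st1) = ctr st1"
  proof (rule ginv_apply_ok[OF g'])
    show "length ms < length (ms @ [mm])" by simp
    show "length ms \<notin> D" by (rule lenD)
    show "snd (snd ((ms @ [mm]) ! length ms)) \<subseteq> D" by (simp add: mm_def)
    show "dom (tree st1) = ri (ms @ [mm]) D" using b ri_app[OF Dsub] by (simp add: st1_def)
    show "gst st1 \<subseteq>\<^sub>m Gm (ms @ [mm])" using cc mono map_le_trans by (simp add: st1_def) blast
    show "\<forall>e\<in>dom (tree st1). \<exists>P. haspath (gst st1) e P" using d by (simp add: st1_def)
    show "rdl (ms @ [mm]) D \<subseteq> ri (ms @ [mm]) D" using ee ri_app[OF Dsub] rdl_app[OF Dsub] by simp
    show "\<forall>e\<in>dom (tree st1). visible st1 e \<longleftrightarrow> e \<notin> rdl (ms @ [mm]) D" using fv rdl_app[OF Dsub] by (simp add: st1_def)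
    show "finite (dom (tree st1))" using fin by (simp add: st1_def)
  qed
  have "rinv c' r'" for r'
  proof (cases "r' = r")
    case True
    have "\<forall>e'\<in>dom (Gm (ms @ [mm])). fst e' = r \<longrightarrow> snd e' < Suc (ctr st)"
      using Gm' ctrI by (auto simp: e_def new_id_def)
    then have C: "\<forall>e'\<in>dom (Gm (ms @ [mm])). fst e' = r \<longrightarrow> snd e' < ctr (apply_msg (fst (snd ((ms @ [mm]) ! length ms))) st1)"
      using A by (simp add: st1_def)
    have e1: "reps c' r = apply_msg (fst (snd ((ms @ [mm]) ! length ms))) st1" using reps' mmj by simp
    have e2: "dlv c' r = insert (length ms) D" using dlv' by simp
    have sub: "insert (length ms) D \<subseteq> {..<length (ms @ [mm])}" using Dsub by auto
    show ?thesis unfolding True rinv_def e1 e2 ms' using A sub C by blast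
  next
    case False
    have rr': "rinv c r'" by (rule rv)
    have e1: "reps c' r' = reps c r'" "dlv c' r' = dlv c r'" using reps' dlv' False by (auto simp: D_def)
    have Ds: "dlv c r' \<subseteq> {..<length ms}" using rr' by (simp add: rinv_def ms_def)
    have "\<forall>e'\<in>dom (Gm (ms @ [mm])). fst e' = r' \<longrightarrow> snd e' < ctr (reps c r')"
      using rr' Gm' False by (auto simp: rinv_def ms_def e_def new_id_def)
    moreover have "gst (reps c r') \<subseteq>\<^sub>m Gm (ms @ [mm])" using rr' mono map_le_trans by (simp add: rinv_def ms_def) blast
    ultimately show ?thesis using rr' e1 ms' ri_app[OF Ds] rdl_app[OF Ds] Ds
      unfolding rinv_def ms_def by auto
  qed
  then show ?thesis using g' ms' by (simp add: einv_def)
qed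


lemma delete_inv:
  fixes c :: "('r::linorder,'v) config"
  assumes einv: "einv c" and stp: "step c (Invoke r (Delete i)) = Some c'"
  shows "einv c'"
proof -
  define st where "st = reps c r"
  define ms where "ms = msgs c"
  define D where "D = dlv c r"
  define e where "e = elems st ! i"
  define mm where "mm = (r, DelMsg e :: ('r,'v) msg, D)"
  have il: "i < length (elems st)" using stp st_def by (auto simp: Let_def split: if_splits)
  have c': "c' = broadcast c r st (DelMsg e)" using stp il by (simp add: Let_def st_def e_def gen_delete_def)
  have ms': "msgs c' = ms @ [mm]" using c' by (simp add: broadcast_def ms_def mm_def D_def)
  have reps': "reps c' = (reps c)(r := apply_msg (DelMsg e) st)" using c' by (simp add: broadcast_def)
  have dlv': "dlv c' = (dlv c)(r := insert (length ms) D)" using c' by (simp add: broadcast_def ms_def D_def)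
  have g: "ginv ms" and rv: "\<And>r. rinv c r" using einv by (auto simp: einv_def ms_def)
  have rr: "rinv c r" by (rule rv)
  from rr have Dsub: "D \<subseteq> {..<length ms}" and b: "dom (tree st) = ri ms D" and cc: "gst st \<subseteq>\<^sub>m Gm ms"
    and d: "\<forall>e\<in>dom (tree st). \<exists>P. haspath (gst st) e P" and ee: "rdl ms D \<subseteq> ri ms D"
    and fv: "\<forall>e\<in>dom (tree st). visible st e \<longleftrightarrow> e \<notin> rdl ms D"
    and ctrI: "\<forall>e\<in>dom (Gm ms). fst e = r \<longrightarrow> snd e < ctr st" and fin: "finite (dom (tree st))"
    unfolding rinv_def st_def ms_def D_def by auto
  from g have gu: "\<forall>j1 j2 e. isins ms j1 e \<longrightarrow> isins ms j2 e \<longrightarrow> j1 = j2"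
    and g3: "\<forall>j e x p s. j < length ms \<longrightarrow> fst (snd (ms ! j)) = InsMsg e x p s \<longrightarrow> Gm ms e = Some (p, s)"
    and gdom: "dom (Gm ms) = {e. \<exists>j. isins ms j e}"
    and gp: "\<forall>e\<in>dom (Gm ms). \<exists>P. haspath (Gm ms) e P"
    and gR: "\<forall>e s. Gm ms e = Some (None, s) \<longrightarrow> s = R"
    and g6: "\<forall>j e x q s. j < length ms \<longrightarrow> fst (snd (ms ! j)) = InsMsg e x (Some q) s \<longrightarrow> (\<exists>j'\<in>snd (snd (ms ! j)). isins ms j' q)"
    and g7: "\<forall>j e. j < length ms \<longrightarrow> fst (snd (ms ! j)) = DelMsg e \<longrightarrow> (\<exists>j'\<in>snd (snd (ms ! j)). isins ms j' e)"
    unfolding ginv_def by blast+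
  have "e \<in> set (elems st)" using il e_def by simp
  then have edom: "e \<in> dom (tree st)" using traversal_props(1)[OF fin d] by (auto simp: elems_def)
  have Gm': "Gm (ms @ [mm]) = Gm ms" by (simp add: Gm_app gstep_def mm_def)
  have isins': "isins (ms @ [mm]) j e' \<longleftrightarrow> isins ms j e'" for j e'
    by (auto simp: isins_app mm_def)
  have nth': "(ms @ [mm]) ! j = ms ! j" if "j < length ms" for j using that by (simp add: nth_append)
  have u1: "\<forall>j1 j2 e. isins (ms @ [mm]) j1 e \<longrightarrow> isins (ms @ [mm]) j2 e \<longrightarrow> j1 = j2"
    using isins' gu by metis
  have u2: "\<forall>j e' x' p' s'. j < length (ms @ [mm]) \<longrightarrow> fst (snd ((ms @ [mm]) ! j)) = InsMsg e' x' p' s' \<longrightarrow> Gm (ms @ [mm]) e' = Some (p', s')"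
  proof (intro allI impI)
    fix j e' x' p' s' assume j: "j < length (ms @ [mm])" "fst (snd ((ms @ [mm]) ! j)) = InsMsg e' x' p' s'"
    show "Gm (ms @ [mm]) e' = Some (p', s')"
    proof (cases "j < length ms")
      case True
      then show ?thesis using g3 j nth' Gm' by metis
    next
      case False
      then have "j = length ms" using j by simp
      then show ?thesis using j by (simp add: mm_def)
    qed
  qed
  have u3: "dom (Gm (ms @ [mm])) = {e'. \<exists>j. isins (ms @ [mm]) j e'}"
    using Gm' gdom isins' by auto
  have u4: "\<forall>e'\<in>dom (Gm (ms @ [mm])). \<exists>P. haspath (Gm (ms @ [mm])) e' P"
    using Gm' gp by simp
  have u5: "\<forall>e' s'. Gm (ms @ [mm]) e' = Some (None, s') \<longrightarrow> s' = R"
    using Gm' gR by simp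
  have u6: "\<forall>j e' x' q s'. j < length (ms @ [mm]) \<longrightarrow> fst (snd ((ms @ [mm]) ! j)) = InsMsg e' x' (Some q) s' \<longrightarrow> (\<exists>j'\<in>snd (snd ((ms @ [mm]) ! j)). isins (ms @ [mm]) j' q)"
  proof (intro allI impI)
    fix j e' x' q s' assume j: "j < length (ms @ [mm])" "fst (snd ((ms @ [mm]) ! j)) = InsMsg e' x' (Some q) s'"
    show "\<exists>j'\<in>snd (snd ((ms @ [mm]) ! j)). isins (ms @ [mm]) j' q"
    proof (cases "j < length ms")
      case True
      then show ?thesis using g6 j nth' isins' by metis
    next
      case False
      then have "j = length ms" using j by simp
      then show ?thesis using j by (simp add: mm_def)
    qed
  qed
  have u7: "\<forall>j e'. j < length (ms @ [mm]) \<longrightarrow> fst (snd ((ms @ [mm]) ! j)) = DelMsg e' \<longrightarrow> (\<exists>j'\<in>snd (snd ((ms @ [mm]) ! j)). isins (ms @ [mm]) j' e')"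
  proof (intro allI impI)
    fix j e' assume j: "j < length (ms @ [mm])" "fst (snd ((ms @ [mm]) ! j)) = DelMsg e'"
    show "\<exists>j'\<in>snd (snd ((ms @ [mm]) ! j)). isins (ms @ [mm]) j' e'"
    proof (cases "j < length ms")
      case True
      then show ?thesis using g7 j nth' isins' by metis
    next
      case False
      then have jl: "j = length ms" using j by simp
      then have "e' = e" using j by (simp add: mm_def)
      then obtain j' where "j' \<in> D" "isins ms j' e'" using edom b by (auto simp: ri_def)
      then show ?thesis using jl isins' by (auto simp: mm_def)
    qed
  qed
  have g': "ginv (ms @ [mm])" unfolding ginv_def using u1 u2 u3 u4 u5 u6 u7 by blast
  have lenD: "length ms \<notin> D" using Dsub by auto
  have mmj: "fst (snd ((ms @ [mm]) ! length ms)) = DelMsg e" by (simp add: mm_def)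
  have A: "dom (tree (apply_msg (fst (snd ((ms @ [mm]) ! length ms))) st)) = ri (ms @ [mm]) (insert (length ms) D) \<and>
    gst (apply_msg (fst (snd ((ms @ [mm]) ! length ms))) st) \<subseteq>\<^sub>m Gm (ms @ [mm]) \<and>
    (\<forall>e\<in>dom (tree (apply_msg (fst (snd ((ms @ [mm]) ! length ms))) st)). \<exists>P. haspath (gst (apply_msg (fst (snd ((ms @ [mm]) ! length ms))) st)) e P) \<and>
    rdl (ms @ [mm]) (insert (length ms) D) \<subseteq> ri (ms @ [mm]) (insert (length ms) D) \<and>
    (\<forall>e\<in>dom (tree (apply_msg (fst (snd ((ms @ [mm]) ! length ms))) st)). visible (apply_msg (fst (snd ((ms @ [mm]) ! length ms))) st) e \<longleftrightarrow> e \<notin> rdl (ms @ [mm]) (insert (length ms) D)) \<and>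
    finite (dom (tree (apply_msg (fst (snd ((ms @ [mm]) ! length ms))) st))) \<and>
    ctr (apply_msg (fst (snd ((ms @ [mm]) ! length ms))) st) = ctr st"
  proof (rule ginv_apply_ok[OF g'])
    show "length ms < length (ms @ [mm])" by simp
    show "length ms \<notin> D" by (rule lenD)
    show "snd (snd ((ms @ [mm]) ! length ms)) \<subseteq> D" by (simp add: mm_def)
    show "dom (tree st) = ri (ms @ [mm]) D" using b ri_app[OF Dsub] by simp
    show "gst st \<subseteq>\<^sub>m Gm (ms @ [mm])" using cc Gm' by simp
    show "\<forall>e\<in>dom (tree st). \<exists>P. haspath (gst st) e P" using d by simp
    show "rdl (ms @ [mm]) D \<subseteq> ri (ms @ [mm]) D" using ee ri_app[OF Dsub] rdl_app[OF Dsub] by simp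
    show "\<forall>e\<in>dom (tree st). visible st e \<longleftrightarrow> e \<notin> rdl (ms @ [mm]) D" using fv rdl_app[OF Dsub] by simp
    show "finite (dom (tree st))" using fin by simp
  qed
  have "rinv c' r'" for r'
  proof (cases "r' = r")
    case True
    have C: "\<forall>e'\<in>dom (Gm (ms @ [mm])). fst e' = r \<longrightarrow> snd e' < ctr (apply_msg (fst (snd ((ms @ [mm]) ! length ms))) st)"
      using A ctrI Gm' by simp
    have e1: "reps c' r = apply_msg (fst (snd ((ms @ [mm]) ! length ms))) st" using reps' mmj by simp
    have e2: "dlv c' r = insert (length ms) D" using dlv' by simp
    have sub: "insert (length ms) D \<subseteq> {..<length (ms @ [mm])}" using Dsub by auto
    show ?thesis unfolding True rinv_def e1 e2 ms' using A sub C by blast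
  next
    case False
    have rr': "rinv c r'" by (rule rv)
    have e1: "reps c' r' = reps c r'" "dlv c' r' = dlv c r'" using reps' dlv' False by (auto simp: D_def)
    have Ds: "dlv c r' \<subseteq> {..<length ms}" using rr' by (simp add: rinv_def ms_def)
    show ?thesis using rr' e1 ms' ri_app[OF Ds] rdl_app[OF Ds] Ds Gm'
      unfolding rinv_def ms_def by auto
  qed
  then show ?thesis using g' ms' by (simp add: einv_def)
qed

lemma step_inv: "einv c \<Longrightarrow> step c ev = Some c' \<Longrightarrow> einv c'"
proof (cases ev)
  case (Invoke r op)
  then show "einv c \<Longrightarrow> step c ev = Some c' \<Longrightarrow> einv c'"
    by (cases op) (auto intro: insert_inv delete_inv)
next
  case (Deliver r j)
  then show "einv c \<Longrightarrow> step c ev = Some c' \<Longrightarrow> einv c'" by (auto intro: deliver_inv)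
qed

lemma step_msgs: "step c ev = Some c' \<Longrightarrow> \<exists>ys. msgs c' = msgs c @ ys"
proof (cases ev)
  case (Invoke r op)
  then show "step c ev = Some c' \<Longrightarrow> \<exists>ys. msgs c' = msgs c @ ys"
    by (cases op) (auto simp: Let_def broadcast_def split: if_splits)
next
  case (Deliver r j)
  then show "step c ev = Some c' \<Longrightarrow> \<exists>ys. msgs c' = msgs c @ ys" by (auto split: if_splits)
qed


abbreviation stepf where "stepf \<equiv> (\<lambda>e co. Option.bind co (\<lambda>c. step c e))"

lemma fold_None: "fold stepf es None = None"
  by (induction es) auto

lemma run_take_Suc: "k < length es \<Longrightarrow> run (take (Suc k) es) = Option.bind (run (take k es)) (\<lambda>c. step c (es ! k))"
  by (simp add: run_def take_Suc_conv_app_nth)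

lemma run_prefix_Some:
  assumes v: "valid_exec es" and k: "k \<le> length es"
  shows "run (take k es) = Some (state_at es k)"
proof -
  have "run es = fold stepf (drop k es) (run (take k es))"
    unfolding run_def by (metis append_take_drop_id comp_apply fold_append)
  then have "run (take k es) \<noteq> None" using v fold_None unfolding valid_exec_def by metis
  then show ?thesis by (auto simp: state_at_def)
qed

lemma step_at:
  assumes v: "valid_exec es" and k: "k < length es"
  shows "step (state_at es k) (es ! k) = Some (state_at es (Suc k))"
  using run_take_Suc[OF k] run_prefix_Some[OF v] k by (metis Suc_leI bind.simps(2) less_imp_le_nat)

lemma inv_at:
  assumes v: "valid_exec es"
  shows "k \<le> length es \<Longrightarrow> einv (state_at es k)"
proof (induction k)
  case 0
  have "state_at es 0 = init" by (simp add: state_at_def run_def)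
  then show ?case using inv_init by simp
next
  case (Suc k)
  then show ?case using step_at[OF v] step_inv by (metis Suc_le_lessD less_imp_le_nat)
qed

lemma msgs_prefix:
  assumes v: "valid_exec es"
  shows "k \<le> n \<Longrightarrow> n \<le> length es \<Longrightarrow> \<exists>ys. msgs (state_at es n) = msgs (state_at es k) @ ys"
proof (induction n)
  case 0
  then show ?case by simp
next
  case (Suc n)
  show ?case
  proof (cases "k = Suc n")
    case True then show ?thesis by simp
  next
    case False
    then have "k \<le> n" using Suc by simp
    then obtain ys where "msgs (state_at es n) = msgs (state_at es k) @ ys" using Suc by auto
    moreover obtain zs where "msgs (state_at es (Suc n)) = msgs (state_at es n) @ zs"
      using step_msgs step_at[OF v] Suc by (metis Suc_le_lessD)
    ultimately show ?thesis by auto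
  qed
qed

lemma Gm_mono:
  assumes gk: "ginv msk" and gf: "ginv (msk @ ys)"
  shows "Gm msk \<subseteq>\<^sub>m Gm (msk @ ys)"
proof (unfold map_le_def, intro ballI)
  fix e assume "e \<in> dom (Gm msk)"
  then obtain j where "isins msk j e" using gk by (auto simp: ginv_def)
  then obtain x p s where j: "j < length msk" "fst (snd (msk ! j)) = InsMsg e x p s" by (auto simp: isins_def)
  then have "Gm msk e = Some (p, s)" using gk unfolding ginv_def by blast
  moreover have "fst (snd ((msk @ ys) ! j)) = InsMsg e x p s" "j < length (msk @ ys)" using j by (auto simp: nth_append)
  then have "Gm (msk @ ys) e = Some (p, s)" using gf unfolding ginv_def by blast
  ultimately show "Gm msk e = Gm (msk @ ys) e" by simp
qed

lemma key_transfer: "g \<subseteq>\<^sub>m G \<Longrightarrow> haspath g w P \<Longrightarrow> key G w = key g w \<and> haspath G w P"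
  using hp_mono key_eq by metis

lemma key_last: "haspath g a P \<Longrightarrow> haspath g b Q \<Longrightarrow> key g a = key g b \<Longrightarrow> a = b"
proof -
  assume h: "haspath g a P" "haspath g b Q" "key g a = key g b"
  then have "P @ [(1, a)] = Q @ [(1, b)]" using key_eq by metis
  then show "a = b" by simp
qed

theorem theorem1:
  fixes es :: "('r::linorder, 'v) event list"
  assumes "valid_exec es"
  shows "\<exists>Rel :: ('r nid \<times> 'r nid) set.
    strict_linear_order_on (inserted (state_at es (length es))) Rel \<and>
    (\<forall>k \<le> length es. \<forall>r.
       sorted_wrt (\<lambda>a b. (a, b) \<in> Rel) (elems (reps (state_at es k) r)) \<and>
       set (elems (reps (state_at es k) r)) =
         received_ins (state_at es k) r - received_del (state_at es k) r) \<and>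
    (\<forall>k < length es. \<forall>r i x. es ! k = Invoke r (Insert i x) \<longrightarrow>
       (let st = reps (state_at es k) r; as = elems st; e = new_id st r in
         (\<forall>j < i. (as ! j, e) \<in> Rel) \<and>
         (\<forall>j. i \<le> j \<and> j < length as \<longrightarrow> (e, as ! j) \<in> Rel)))"
proof -
  note v = assms
  define cf where "cf = state_at es (length es)"
  define Gf where "Gf = Gm (msgs cf)"
  define Rel where "Rel = {(a, b). a \<in> dom Gf \<and> b \<in> dom Gf \<and> LX (key Gf a) (key Gf b)}"
  have invf: "einv cf" using inv_at[OF v] cf_def by simp
  have gf: "ginv (msgs cf)" using invf by (simp add: einv_def)
  have gfp: "\<forall>e\<in>dom Gf. \<exists>P. haspath Gf e P" using gf by (simp add: ginv_def Gf_def)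
  have ins: "inserted cf = dom Gf" using gf by (simp add: inserted_eq ginv_def Gf_def)
  have slo: "strict_linear_order_on (inserted cf) Rel"
    unfolding strict_linear_order_on_def
  proof (intro conjI)
    show "trans Rel" by (rule transI) (auto simp: Rel_def intro: LX_trans)
    show "irrefl Rel" by (rule irreflI) (simp add: Rel_def LX_irrefl)
    show "total_on (inserted cf) Rel"
    proof (rule total_onI)
      fix a b assume ab: "a \<in> inserted cf" "b \<in> inserted cf" "a \<noteq> b"
      then obtain Pa Pb where "haspath Gf a Pa" "haspath Gf b Pb" using ins gfp by blast
      then have "key Gf a \<noteq> key Gf b" using key_last ab(3) by metis
      then show "(a, b) \<in> Rel \<or> (b, a) \<in> Rel" using ab ins lexordp_linear unfolding Rel_def by blast
    qed
  qed
  have stfacts: "gst (reps (state_at es k) r) \<subseteq>\<^sub>m Gf \<and> finite (dom (tree (reps (state_at es k) r))) \<and>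
      (\<forall>e\<in>dom (tree (reps (state_at es k) r)). \<exists>P. haspath (gst (reps (state_at es k) r)) e P) \<and>
      dom (tree (reps (state_at es k) r)) = received_ins (state_at es k) r \<and>
      (\<forall>e\<in>dom (tree (reps (state_at es k) r)). visible (reps (state_at es k) r) e \<longleftrightarrow> e \<notin> received_del (state_at es k) r) \<and>
      (\<forall>c s. gst (reps (state_at es k) r) c = Some (None, s) \<longrightarrow> s = R)"
    if k: "k \<le> length es" for k r
  proof -
    have ik: "einv (state_at es k)" using inv_at[OF v k] .
    obtain ys where ys: "msgs cf = msgs (state_at es k) @ ys" using msgs_prefix[OF v k] cf_def by auto
    have le: "Gm (msgs (state_at es k)) \<subseteq>\<^sub>m Gf"
      using Gm_mono[of "msgs (state_at es k)" ys] ik gf ys unfolding Gf_def by (simp add: einv_def)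
    have rk: "rinv (state_at es k) r" using ik by (simp add: einv_def)
    have gR: "\<forall>e s. Gm (msgs (state_at es k)) e = Some (None, s) \<longrightarrow> s = R"
      using ik by (simp add: einv_def ginv_def)
    from rk have A: "gst (reps (state_at es k) r) \<subseteq>\<^sub>m Gm (msgs (state_at es k))"
      "finite (dom (tree (reps (state_at es k) r)))"
      "\<forall>e\<in>dom (tree (reps (state_at es k) r)). \<exists>P. haspath (gst (reps (state_at es k) r)) e P"
      "dom (tree (reps (state_at es k) r)) = ri (msgs (state_at es k)) (dlv (state_at es k) r)"
      "\<forall>e\<in>dom (tree (reps (state_at es k) r)). visible (reps (state_at es k) r) e \<longleftrightarrow> e \<notin> rdl (msgs (state_at es k)) (dlv (state_at es k) r)"
      unfolding rinv_def by blast+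
    have B: "gst (reps (state_at es k) r) \<subseteq>\<^sub>m Gf" using A(1) le by (rule map_le_trans)
    have C: "\<forall>c s. gst (reps (state_at es k) r) c = Some (None, s) \<longrightarrow> s = R"
    proof (intro allI impI)
      fix c s assume "gst (reps (state_at es k) r) c = Some (None, s)"
      then have "Gm (msgs (state_at es k)) c = Some (None, s)" using A(1) by (metis domI map_le_def)
      then show "s = R" using gR by blast
    qed
    show ?thesis unfolding received_ins_ri received_del_rdl using A B C by blast
  qed
  have partA: "sorted_wrt (\<lambda>a b. (a, b) \<in> Rel) (elems (reps (state_at es k) r)) \<and>
       set (elems (reps (state_at es k) r)) = received_ins (state_at es k) r - received_del (state_at es k) r"
    if k: "k \<le> length es" for k r
  proof -
    define st where "st = reps (state_at es k) r"
    have F: "gst st \<subseteq>\<^sub>m Gf" "finite (dom (tree st))" "\<forall>e\<in>dom (tree st). \<exists>P. haspath (gst st) e P"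
      "dom (tree st) = received_ins (state_at es k) r"
      "\<forall>e\<in>dom (tree st). visible st e \<longleftrightarrow> e \<notin> received_del (state_at es k) r"
      using stfacts[OF k, of r] st_def by auto
    have T: "set (traversal st) = dom (tree st)" "sorted_wrt (KR (gst st)) (traversal st)"
      using traversal_props[OF F(2) F(3)] by auto
    have s1: "sorted_wrt (KR (gst st)) (elems st)" unfolding elems_def using T(2) by (rule sorted_wrt_filter)
    have sub: "set (elems st) \<subseteq> dom (tree st)" using T(1) by (auto simp: elems_def)
    have "sorted_wrt (\<lambda>a b. (a, b) \<in> Rel) (elems st)"
    proof (rule sorted_wrt_mono_rel[OF _ s1])
      fix a b assume ab: "a \<in> set (elems st)" "b \<in> set (elems st)" "KR (gst st) a b"
      obtain Pa Pb where ha: "haspath (gst st) a Pa" and hb: "haspath (gst st) b Pb" using ab sub F(3) by blast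
      have ta: "key Gf a = key (gst st) a" "haspath Gf a Pa" using key_transfer[OF F(1) ha] by blast+
      have tb: "key Gf b = key (gst st) b" "haspath Gf b Pb" using key_transfer[OF F(1) hb] by blast+
      have "a \<in> dom Gf" "b \<in> dom Gf" using hp_last[OF ta(2)] hp_last[OF tb(2)] by blast+
      then show "(a, b) \<in> Rel" using ab(3) ta(1) tb(1) unfolding Rel_def KR_def by simp
    qed
    moreover have "set (elems st) = received_ins (state_at es k) r - received_del (state_at es k) r"
      using T(1) F(4) F(5) by (auto simp: elems_def)
    ultimately show ?thesis using st_def by simp
  qed
  have partB: "(\<forall>j < i. (elems (reps (state_at es k) r) ! j, new_id (reps (state_at es k) r) r) \<in> Rel) \<and>
         (\<forall>j. i \<le> j \<and> j < length (elems (reps (state_at es k) r)) \<longrightarrow> (new_id (reps (state_at es k) r) r, elems (reps (state_at es k) r) ! j) \<in> Rel)"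
    if k: "k < length es" and ek: "es ! k = Invoke r (Insert i x)" for k r i x
  proof -
    define ck where "ck = state_at es k"
    define st where "st = reps ck r"
    define e where "e = new_id st r"
    define as where "as = elems st"
    have kl: "k \<le> length es" using k by simp
    have F: "gst st \<subseteq>\<^sub>m Gf" "finite (dom (tree st))" "\<forall>e\<in>dom (tree st). \<exists>P. haspath (gst st) e P"
      "\<forall>c s. gst st c = Some (None, s) \<longrightarrow> s = R"
      using stfacts[OF kl, of r] st_def ck_def by auto
    have T: "set (traversal st) = dom (tree st)" "sorted_wrt (KR (gst st)) (traversal st)"
      using traversal_props[OF F(2) F(3)] by auto
    have s1: "sorted_wrt (KR (gst st)) as" unfolding as_def elems_def using T(2) by (rule sorted_wrt_filter)
    have sub: "set as \<subseteq> dom (tree st)" using T(1) by (auto simp: elems_def as_def)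
    have stp: "step ck (Invoke r (Insert i x)) = Some (state_at es (Suc k))"
      using step_at[OF v k] ek ck_def by simp
    then have il: "i \<le> length (elems st)" by (auto simp: st_def Let_def split: if_splits)
    obtain p s where m: "gen_insert st r i x = InsMsg (new_id st r) x p s"
      using gen_insert_form[of st r i x] by (elim exE)
    have sk: "state_at es (Suc k) = broadcast ck r (st\<lparr>ctr := Suc (ctr st)\<rparr>) (gen_insert st r i x)"
      using stp il unfolding st_def by (simp add: Let_def)
    have msk: "msgs (state_at es (Suc k)) = msgs ck @ [(r, InsMsg e x p s, dlv ck r)]"
      using sk m by (simp add: broadcast_def e_def)
    obtain ys where ys: "msgs cf = msgs (state_at es (Suc k)) @ ys"
      using msgs_prefix[OF v, of "Suc k" "length es"] k cf_def by auto
    have j0: "length (msgs ck) < length (msgs cf)" "fst (snd (msgs cf ! length (msgs ck))) = InsMsg e x p s"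
      using ys msk by (auto simp: nth_append)
    then have "Gf e = Some (p, s)" using gf unfolding Gf_def ginv_def by blast
    from ins_analysis[OF F(2) F(3) F(4) il m] obtain Pp where pp: "pp (gst st) p Pp"
      and H: "\<forall>e'. (0 < i \<longrightarrow> LX (key (gst st) (elems st ! (i - 1))) (Pp @ [(sc s, e'), (1, e')])) \<and>
      (\<forall>w\<in>dom (tree st). (0 < i \<longrightarrow> LX (key (gst st) (elems st ! (i - 1))) (key (gst st) w)) \<longrightarrow>
            LX (Pp @ [(sc s, e'), (1, e')]) (key (gst st) w))" by blast
    have he: "haspath Gf e (Pp @ [(sc s, e)])"
    proof (cases p)
      case None
      then show ?thesis using pp \<open>Gf e = Some (p, s)\<close> by (auto simp: pp_def intro: hp_root)
    next
      case (Some q)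
      then have "haspath (gst st) q Pp" using pp by (simp add: pp_def)
      then have "haspath Gf q Pp" using hp_mono F(1) by blast
      then show ?thesis using Some \<open>Gf e = Some (p, s)\<close> by (auto intro: hp_step)
    qed
    have ke: "key Gf e = Pp @ [(sc s, e), (1, e)]" using key_eq[OF he] by simp
    have edom: "e \<in> dom Gf" using \<open>Gf e = Some (p, s)\<close> by auto
    note He = spec[OF H, of e]
    have Hd: "LX (key (gst st) (as ! (i - 1))) (key Gf e)" if "0 < i" using He that ke as_def by simp
    have Hw: "LX (key Gf e) (key (gst st) w)" if "w \<in> dom (tree st)" "0 < i \<longrightarrow> KR (gst st) (as ! (i - 1)) w" for w
      using He that ke as_def unfolding KR_def by simp
    have tr: "key Gf w = key (gst st) w \<and> w \<in> dom Gf" if wd: "w \<in> dom (tree st)" for w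
    proof -
      obtain P where hw: "haspath (gst st) w P" using F(3) wd by blast
      have t: "key Gf w = key (gst st) w" "haspath Gf w P" using key_transfer[OF F(1) hw] by blast+
      then show ?thesis using hp_last[OF t(2)] by blast
    qed
    have asd: "as ! j \<in> dom (tree st)" if "j < length as" for j using sub that nth_mem by blast
    have r1: "(as ! j, e) \<in> Rel" if "j < i" for j
    proof -
      have jl: "j < length as" "i - 1 < length as" using that il as_def by auto
      have "LX (key (gst st) (as ! j)) (key Gf e)"
      proof (cases "j = i - 1")
        case True then show ?thesis using Hd that by simp
      next
        case False
        then have "KR (gst st) (as ! j) (as ! (i - 1))" using sorted_wrt_nth_less[OF s1] that jl by simp
        then show ?thesis using Hd that LX_trans unfolding KR_def by fastforce
      qed
      then show ?thesis unfolding Rel_def using tr[OF asd[OF jl(1)]] edom by simp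
    qed
    have r2: "(e, as ! j) \<in> Rel" if "i \<le> j" "j < length as" for j
    proof -
      have "0 < i \<longrightarrow> KR (gst st) (as ! (i - 1)) (as ! j)" using sorted_wrt_nth_less[OF s1] that by auto
      then have "LX (key Gf e) (key (gst st) (as ! j))" using Hw asd that by blast
      then show ?thesis unfolding Rel_def using tr[OF asd[OF that(2)]] edom by simp
    qed
    show ?thesis using r1 r2 unfolding as_def e_def st_def ck_def by blast
  qed
  show ?thesis
    apply (rule exI[of _ Rel])
    using slo partA partB unfolding cf_def Let_def by blast
qed


end
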